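(* For any finite set $D$ (with $|D|\ge2$) and any set $\Omega \subseteq \mathbf{W}^{\mathbb{R}}_D$ of weightings, we have $\mathrm{wPol}_{\mathbb{R}}(\mathrm{Imp}_{\mathbb{R}}(\Omega)) = \mathrm{wClone}_{\mathbb{R}}(\Omega)$.
   Context: Let $\overline{\mathbb{R}}=\mathbb{R}\cup\{\infty\}$. An $m$-ary weighted relation on $D$ is a map $\gamma:D^m\to\overline{\mathbb{R}}$; $\mathbf{\Phi}^{\mathbb{R}}_D$ is the set of all of them and $\mathrm{Feas}(\gamma)=\{\mathbf{x}:\gamma(\mathbf{x})<\infty\}$. A $k$-ary operation is $f:D^k\to D$, applied to tuples coordinatewise; $\mathbf{O}^{(k)}_D$ is the set of $k$-ary operations. $f$ is a polymorphism of $\gamma$ if $f(\mathbf{x}_1,\dots,\mathbf{x}_k)\in\mathrm{Feas}(\gamma)$ whenever all $\mathbf{x}_i\in\mathrm{Feas}(\gamma)$; $\mathrm{Pol}(\gamma)$ is the set of its polymorphisms. Projections: $e^{(k)}_i(x_1,\dots,x_k)=x_i$; $\mathbf{J}_D$ is the set of all projections, $\mathbf{J}_D^{(k)}$ the $k$-ary ones. Superposition of operations: $f[g_1,\dots,g_k](\mathbf{x})=f(g_1(\mathbf{x}),\dots,g_k(\mathbf{x}))$. A $k$-ary weighting is a function $\omega:\mathbf{O}^{(k)}_D\to\mathbb{R}$ with $\sum_f\omega(f)=0$ and $\omega(f)<0$ only if $f$ is a projection; $\mathbf{W}^{\mathbb{R}}_D$ is the set of all weightings. $\mathrm{supp}(\omega)=\mathbf{J}_D^{(k)}\cup\{f:\omega(f)>0\}$,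 and for a non-empty set $\Omega$ of weightings, $\mathrm{supp}(\Omega)=\mathbf{J}_D\cup\bigcup_{\omega\in\Omega}\mathrm{supp}(\omega)$. For $\omega:\mathbf{O}^{(k)}_D\to\mathbb{R}$ and $\ell$-ary $g_1,\dots,g_k$, the superposition $\omega[g_1,\dots,g_k]:\mathbf{O}^{(\ell)}_D\to\mathbb{R}$ is $\omega[g_1,\dots,g_k](f')=\sum_{f:f[g_1,\dots,g_k]=f'}\omega(f)$; it is proper if it is a weighting. Topology: the $k$-ary weightings lie in $\mathbb{R}^{\mathbf{O}^{(k)}_D}$ (Euclidean topology), and the set of all weightings carries the disjoint union topology over $k$. A weighted clone is a non-empty set $\Omega$ of weightings closed under scaling by non-negative reals, addition of weightings of equal arity, and proper superposition with operations from $\mathrm{supp}(\Omega)$, and topologically closed; $\mathrm{wClone}_{\mathbb{R}}(\Omega)$ is the smallest weighted clone containing $\Omega$. $\omega$ ($k$-ary) is a weighted polymorphism of $\gamma$ ($\gamma$ is improved by $\omega$) if $\mathrm{supp}(\omega)\subseteq\mathrm{Pol}(\gamma)$ and for all $\mathbf{x}_1,\dots,\mathbf{x}_k\in\mathrm{Feas}(\gamma)$, $\sum_{f\in\mathrm{supp}(\omega)}\omega(f)\gamma(f(\mathbf{x}_1,\dots,\mathbf{x}_k))\le0$. $\mathrm{Imp}_{\mathbb{R}}(\Omega)$ is the set of weighted relations in $\mathbf{\Phi}^{\mathbb{R}}_D$ improved by every $\omega\in\Omega$, and $\mathrm{wPol}_{\mathbb{R}}(\Gamma)$ is the set of weightings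 that are weighted polymorphisms of every $\gamma\in\Gamma$. *)

theory Defs
  imports "HOL-Analysis.Analysis" "HOL-Library.Extended_Real"
begin

text \<open>Domain D: a finite type 'a. An operation is tagged with its arity k:
  a pair (k, f) where f acts on lists of length k (tuples in D^k) and is
  canonically undefined on lists of other lengths.\<close>

type_synonym 'a oper = "nat \<times> ('a list \<Rightarrow> 'a)"

definition ops :: "nat \<Rightarrow> 'a oper set" where
  "ops k = {(k, f) | f. \<forall>xs. length xs \<noteq> k \<longrightarrow> f xs = undefined}"

definition proj :: "nat \<Rightarrow> nat \<Rightarrow> 'a oper" where
  "proj k i = (k, \<lambda>xs. if length xs = k then xs ! i else undefined)"

definition projs :: "nat \<Rightarrow> 'a oper set" where
  "projs k = {proj k i | i. i < k}"

definition all_projs :: "'a oper set" where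
  "all_projs = (\<Union>k. projs k)"

definition comp_op :: "'a oper \<Rightarrow> 'a oper list \<Rightarrow> nat \<Rightarrow> 'a oper" where
  "comp_op F gs l = (l, \<lambda>xs. if length xs = l
        then snd F (map (\<lambda>g. snd g xs) gs) else undefined)"

definition app_op :: "'a oper \<Rightarrow> nat \<Rightarrow> 'a list list \<Rightarrow> 'a list" where
  "app_op F m xs = map (\<lambda>j. snd F (map (\<lambda>x. x ! j) xs)) [0..<m]"

text \<open>A weighting is a pair (k, \<omega>), \<omega> : O^(k) \<rightarrow> R (extended by 0 outside O^(k)).\<close>
type_synonym 'a weighting = "nat \<times> ('a oper \<Rightarrow> real)"

definition is_weighting :: "'a weighting \<Rightarrow> bool" where
  "is_weighting W \<longleftrightarrow> (case W of (k, \<omega>) \<Rightarrow>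
      k \<ge> 1 \<and> (\<forall>f. f \<notin> ops k \<longrightarrow> \<omega> f = 0)
      \<and> sum \<omega> (ops k) = 0
      \<and> (\<forall>f \<in> ops k. \<omega> f < 0 \<longrightarrow> f \<in> projs k))"

definition weightings :: "'a weighting set" where
  "weightings = {W. is_weighting W}"

definition wsupp :: "'a weighting \<Rightarrow> 'a oper set" where
  "wsupp W = projs (fst W) \<union> {f. snd W f > 0}"

definition wsupp_set :: "'a weighting set \<Rightarrow> 'a oper set" where
  "wsupp_set C = all_projs \<union> (\<Union>W\<in>C. wsupp W)"

definition wsup :: "'a weighting \<Rightarrow> 'a oper list \<Rightarrow> nat \<Rightarrow> 'a weighting" where
  "wsup W gs l = (l, \<lambda>f'. \<Sum>f \<in> {f \<in> ops (fst W). comp_op f gs l = f'}. snd W f)"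

text \<open>Weighted clones (topology: product topology on functions, which on each
  arity slice is the Euclidean topology on R^(O^(k)); the disjoint union topology
  means closedness slicewise).\<close>
definition wclone :: "'a weighting set \<Rightarrow> bool" where
  "wclone C \<longleftrightarrow> C \<noteq> {} \<and> C \<subseteq> weightings
    \<and> (\<forall>(k, \<omega>) \<in> C. \<forall>c::real. c \<ge> 0 \<longrightarrow> (k, \<lambda>f. c * \<omega> f) \<in> C)
    \<and> (\<forall>(k, \<omega>1) \<in> C. \<forall>(k', \<omega>2) \<in> C. k = k' \<longrightarrow> (k, \<lambda>f. \<omega>1 f + \<omega>2 f) \<in> C)
    \<and> (\<forall>W \<in> C. \<forall>l gs. l \<ge> 1 \<longrightarrow> length gs = fst W \<longrightarrow>
          set gs \<subseteq> wsupp_set C \<inter> ops l \<longrightarrow>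
          is_weighting (wsup W gs l) \<longrightarrow> wsup W gs l \<in> C)
    \<and> (\<forall>k. closed {\<omega>. (k, \<omega>) \<in> C})"

definition wClone :: "'a weighting set \<Rightarrow> 'a weighting set" where
  "wClone \<Omega> = \<Inter>{C. wclone C \<and> \<Omega> \<subseteq> C}"

text \<open>Weighted relations of arity m \<ge> 1, values in R \<union> {\<infinity>} (ereal, never -\<infinity>),
  canonically \<infinity> off D^m.\<close>
type_synonym 'a wrel = "nat \<times> ('a list \<Rightarrow> ereal)"

definition wrels :: "'a wrel set" where
  "wrels = {(m, \<gamma>). m \<ge> 1 \<and> (\<forall>x. \<gamma> x \<noteq> -\<infinity>) \<and> (\<forall>x. length x \<noteq> m \<longrightarrow> \<gamma> x = \<infinity>)}"

definition feas :: "'a wrel \<Rightarrow> 'a list set" where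
  "feas R = {x. length x = fst R \<and> snd R x < \<infinity>}"

definition Pol :: "'a wrel \<Rightarrow> 'a oper set" where
  "Pol R = {F. \<exists>k. F \<in> ops k \<and> (\<forall>xs. length xs = k \<longrightarrow> set xs \<subseteq> feas R
              \<longrightarrow> app_op F (fst R) xs \<in> feas R)}"

definition improves :: "'a weighting \<Rightarrow> 'a wrel \<Rightarrow> bool" where
  "improves W R \<longleftrightarrow> wsupp W \<subseteq> Pol R \<and>
     (\<forall>xs. length xs = fst W \<longrightarrow> set xs \<subseteq> feas R \<longrightarrow>
        (\<Sum>f \<in> wsupp W. ereal (snd W f) * snd R (app_op f (fst R) xs)) \<le> 0)"

definition Imp :: "'a weighting set \<Rightarrow> 'a wrel set" where
  "Imp \<Omega> = {R \<in> wrels. \<forall>W \<in> \<Omega>. improves W R}"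

definition wPol :: "'a wrel set \<Rightarrow> 'a weighting set" where
  "wPol \<Gamma> = {W \<in> weightings. \<forall>R \<in> \<Gamma>. improves W R}"

end

theory Submission
  imports Defs
begin


lemma closed_V: "closed {v::'x \<Rightarrow> real. \<forall>x. x \<notin> X \<longrightarrow> v x = 0}"
  by (intro closed_Collect_all closed_Collect_imp closed_Collect_eq) (auto intro: continuous_intros)

lemma compact_box:
  fixes B :: real
  shows "compact {v::'x \<Rightarrow> real. \<forall>x. v x \<in> (if x \<in> X then {-B..B} else {0})}"
proof -
  have eq: "{v::'x \<Rightarrow> real. \<forall>x. v x \<in> (if x \<in> X then {-B..B} else {0})}
      = PiE UNIV (\<lambda>x. if x \<in> X then {-B..B} else {0})"
    by (auto simp: PiE_def Pi_def)
  have "compactin (product_topology (\<lambda>i. euclidean) UNIV) (PiE UNIV (\<lambda>x. if x \<in> X then {-B..B::real} else {0}))"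
    by (subst compactin_PiE) auto
  then show ?thesis unfolding eq euclidean_product_topology by simp
qed

lemma quad_nonneg_lin:
  fixes a b :: real
  assumes "\<And>t. t > 0 \<Longrightarrow> t \<le> 1 \<Longrightarrow> 0 \<le> - 2 * t * a + t^2 * b" and "b \<ge> 0"
  shows "a \<le> 0"
proof (rule ccontr)
  assume "\<not> a \<le> 0"
  hence a: "a > 0" by simp
  define t where "t = a / (b + 1 + a)"
  have t: "t > 0" using a assms(2) by (simp add: t_def)
  have t1: "t \<le> 1" using a assms(2) by (simp add: t_def)
  have "0 \<le> - 2 * t * a + t^2 * b" using assms(1) t t1 by simp
  hence "0 \<le> t * (- 2 * a + t * b)" by (simp add: power2_eq_square algebra_simps)
  hence "0 \<le> - 2 * a + t * b" using t by (simp add: zero_le_mult_iff)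
  moreover have "t * b \<le> a"
  proof -
    have "t * b = a * (b / (b+1+a))" by (simp add: t_def)
    also have "\<dots> \<le> a * 1" using a assms(2) by (intro mult_left_mono) auto
    finally show ?thesis by simp
  qed
  ultimately show False using a by linarith
qed

lemma cone_sep:
  fixes X :: "'x set" and K :: "('x \<Rightarrow> real) set" and z :: "'x \<Rightarrow> real"
  assumes fin: "finite X"
    and KV: "\<And>v x. v \<in> K \<Longrightarrow> x \<notin> X \<Longrightarrow> v x = 0"
    and K0: "(\<lambda>_. 0) \<in> K"
    and Kadd: "\<And>u v. u \<in> K \<Longrightarrow> v \<in> K \<Longrightarrow> (\<lambda>x. u x + v x) \<in> K"
    and Kscale: "\<And>v c. v \<in> K \<Longrightarrow> c \<ge> 0 \<Longrightarrow> (\<lambda>x. c * v x) \<in> K"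
    and zV: "\<And>x. x \<notin> X \<Longrightarrow> z x = 0"
    and zK: "z \<notin> closure K"
  shows "\<exists>\<gamma>. (\<forall>v\<in>K. (\<Sum>x\<in>X. v x * \<gamma> x) \<le> 0) \<and> (\<Sum>x\<in>X. z x * \<gamma> x) > 0"
proof -
  define F where "F v = (\<Sum>x\<in>X. (z x - v x)^2)" for v :: "'x \<Rightarrow> real"
  define M where "M = (\<Sum>x\<in>X. \<bar>z x\<bar>)"
  define B where "B = 2 * M + 1"
  have M0: "M \<ge> 0" unfolding M_def by (simp add: sum_nonneg)
  define Box where "Box = {v::'x \<Rightarrow> real. \<forall>x. v x \<in> (if x \<in> X then {-B..B} else {0})}"
  define A where "A = closure K \<inter> Box"
  have cV: "closure K \<subseteq> {v. \<forall>x. x \<notin> X \<longrightarrow> v x = 0}"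
    by (rule closure_minimal) (use KV closed_V in auto)
  have "compact A" unfolding A_def Box_def
    by (intro closed_Int_compact compact_box) auto
  moreover have "(\<lambda>_. 0) \<in> A" unfolding A_def Box_def B_def using K0 closure_subset M0 by auto
  moreover have "continuous_on A F" unfolding F_def
    by (intro continuous_intros continuous_on_product_then_coordinatewise continuous_on_id)
  ultimately obtain p where pA: "p \<in> A" and pmin: "\<And>y. y \<in> A \<Longrightarrow> F p \<le> F y"
    using continuous_attains_inf[of A F] by blast
  have zx: "\<bar>z x\<bar> \<le> M" if "x \<in> X" for x
    unfolding M_def using fin that by (intro member_le_sum) auto
  have zsq: "(\<Sum>x\<in>X. (z x)^2) \<le> M^2"
  proof -
    have "(\<Sum>x\<in>X. (z x)^2) \<le> (\<Sum>x\<in>X. \<bar>z x\<bar> * M)"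
    proof (rule sum_mono)
      fix x assume "x \<in> X"
      have "(z x)^2 = \<bar>z x\<bar> * \<bar>z x\<bar>" by (simp add: power2_eq_square)
      also have "\<dots> \<le> \<bar>z x\<bar> * M" using zx[OF \<open>x \<in> X\<close>] by (intro mult_left_mono) auto
      finally show "(z x)^2 \<le> \<bar>z x\<bar> * M" .
    qed
    also have "\<dots> = M^2" by (simp add: M_def sum_distrib_right power2_eq_square)
    finally show ?thesis .
  qed
  have F0: "F (\<lambda>_. 0) \<le> M^2" using zsq by (simp add: F_def)
  have pmin': "F p \<le> F y" if y: "y \<in> closure K" for y
  proof (cases "y \<in> Box")
    case True thus ?thesis using pmin y A_def by auto
  next
    case False
    then obtain x0 where x0: "y x0 \<notin> (if x0 \<in> X then {-B..B} else {0})" unfolding Box_def by auto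
    have x0X: "x0 \<in> X" using x0 cV y by (auto split: if_splits)
    hence "\<bar>y x0\<bar> > B" using x0 by auto
    moreover have "\<bar>z x0\<bar> \<le> M" using zx x0X by blast
    ultimately have "\<bar>z x0 - y x0\<bar> > M" unfolding B_def by linarith
    hence "M^2 < \<bar>z x0 - y x0\<bar>^2" using M0 by (intro power_strict_mono) auto
    hence "(z x0 - y x0)^2 > M^2" by simp
    moreover have "(z x0 - y x0)^2 \<le> F y" unfolding F_def
      using fin x0X by (intro member_le_sum) auto
    moreover have "F p \<le> F (\<lambda>_. 0)" using pmin \<open>(\<lambda>_. 0) \<in> A\<close> by blast
    ultimately show ?thesis using F0 by linarith
  qed
  have pK: "p \<in> closure K" using pA A_def by auto
  define d where "d x = z x - p x" for x
  have var1: "(\<Sum>x\<in>X. v x * d x) \<le> 0" if vK: "v \<in> K" for v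
  proof -
    have "(\<lambda>x. p x + t * v x) \<in> closure K" if t: "t > 0" for t
    proof -
      have "(\<lambda>u. (\<lambda>x. u x + t * v x)) ` closure K \<subseteq> closure K"
      proof (rule image_closure_subset)
        show "continuous_on (closure K) (\<lambda>u x. u x + t * v x)"
          by (intro continuous_intros continuous_on_product_then_coordinatewise continuous_on_id)
        show "(\<lambda>u x. u x + t * v x) ` K \<subseteq> closure K"
        proof (rule image_subsetI)
          fix u assume "u \<in> K"
          hence "(\<lambda>x. u x + t * v x) \<in> K" using Kadd Kscale vK t by simp
          thus "(\<lambda>x. u x + t * v x) \<in> closure K" using closure_subset by blast
        qed
      qed simp
      thus ?thesis using pK by blast
    qed
    hence Fimg: "F p \<le> F (\<lambda>x. p x + t * v x)" if "t > 0" for t using pmin' that by blast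
    have Fexp: "F (\<lambda>x. p x + t * v x) = F p - 2 * t * (\<Sum>x\<in>X. v x * d x) + t^2 * (\<Sum>x\<in>X. (v x)^2)" for t
    proof -
      have "F (\<lambda>x. p x + t * v x) = (\<Sum>x\<in>X. (z x - p x)^2 - 2 * t * (v x * d x) + t^2 * (v x)^2)"
        unfolding F_def d_def by (intro sum.cong refl) (simp add: power2_eq_square algebra_simps)
      also have "\<dots> = F p - 2 * t * (\<Sum>x\<in>X. v x * d x) + t^2 * (\<Sum>x\<in>X. (v x)^2)"
        unfolding F_def by (simp add: sum.distrib sum_subtractf sum_distrib_left)
      finally show ?thesis .
    qed
    have "0 \<le> - 2 * t * (\<Sum>x\<in>X. v x * d x) + t^2 * (\<Sum>x\<in>X. (v x)^2)" if "t > 0" for t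
    proof -
      have "F p \<le> F (\<lambda>x. p x + t * v x)" using that Fimg by blast
      thus ?thesis using Fexp[of t] by linarith
    qed
    thus ?thesis by (rule quad_nonneg_lin) (auto intro: sum_nonneg)
  qed
  have var2: "(\<Sum>x\<in>X. p x * d x) = 0"
  proof -
    have sc: "(\<lambda>x. c * p x) \<in> closure K" if c: "c \<ge> 0" for c
    proof -
      have "(\<lambda>u. (\<lambda>x. c * u x)) ` closure K \<subseteq> closure K"
      proof (rule image_closure_subset)
        show "continuous_on (closure K) (\<lambda>u x. c * u x)"
          by (intro continuous_intros continuous_on_product_then_coordinatewise continuous_on_id)
        show "(\<lambda>u x. c * u x) ` K \<subseteq> closure K"
          using Kscale c closure_subset by blast
      qed simp
      thus ?thesis using pK by blast
    qed
    have key: "0 \<le> 2 * s * (\<Sum>x\<in>X. p x * d x) + s^2 * (\<Sum>x\<in>X. (p x)^2)" if "s \<le> 1" for s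
    proof -
      have "F p \<le> F (\<lambda>x. (1 - s) * p x)" using pmin' sc[of "1 - s"] that by simp
      moreover have "F (\<lambda>x. (1 - s) * p x) = F p + 2 * s * (\<Sum>x\<in>X. p x * d x) + s^2 * (\<Sum>x\<in>X. (p x)^2)"
      proof -
        have "F (\<lambda>x. (1 - s) * p x) = (\<Sum>x\<in>X. (z x - p x)^2 + 2 * s * (p x * d x) + s^2 * (p x)^2)"
          unfolding F_def d_def by (intro sum.cong refl) (simp add: power2_eq_square algebra_simps)
        also have "\<dots> = F p + 2 * s * (\<Sum>x\<in>X. p x * d x) + s^2 * (\<Sum>x\<in>X. (p x)^2)"
          unfolding F_def by (simp add: sum.distrib sum_subtractf sum_distrib_left)
        finally show ?thesis .
      qed
      ultimately show ?thesis by linarith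
    qed
    have le: "(\<Sum>x\<in>X. p x * d x) \<le> 0"
    proof (rule quad_nonneg_lin)
      fix t :: real assume "t > 0" "t \<le> 1"
      show "0 \<le> - 2 * t * (\<Sum>x\<in>X. p x * d x) + t^2 * (\<Sum>x\<in>X. (p x)^2)"
        using key[of "-t"] \<open>t > 0\<close> by simp
    qed (auto intro: sum_nonneg)
    have ge: "- (\<Sum>x\<in>X. p x * d x) \<le> 0"
    proof (rule quad_nonneg_lin)
      fix t :: real assume "t > 0" "t \<le> 1"
      show "0 \<le> - 2 * t * - (\<Sum>x\<in>X. p x * d x) + t^2 * (\<Sum>x\<in>X. (p x)^2)"
        using key[of t] \<open>t \<le> 1\<close> by simp
    qed (auto intro: sum_nonneg)
    show ?thesis using le ge by simp
  qed
  have "(\<Sum>x\<in>X. z x * d x) = (\<Sum>x\<in>X. (d x)^2) + (\<Sum>x\<in>X. p x * d x)"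
  proof -
    have "(\<Sum>x\<in>X. z x * d x) = (\<Sum>x\<in>X. (d x)^2 + p x * d x)"
      unfolding d_def by (intro sum.cong refl) (simp add: power2_eq_square algebra_simps)
    thus ?thesis by (simp add: sum.distrib)
  qed
  also have "\<dots> = (\<Sum>x\<in>X. (d x)^2)" using var2 by simp
  finally have zd: "(\<Sum>x\<in>X. z x * d x) = (\<Sum>x\<in>X. (d x)^2)" .
  have "(\<Sum>x\<in>X. (d x)^2) > 0"
  proof (rule ccontr)
    assume "\<not> ?thesis"
    hence "(\<Sum>x\<in>X. (d x)^2) = 0" by (simp add: sum_nonneg antisym)
    hence "\<forall>x\<in>X. (d x)^2 = 0" using fin by (simp add: sum_nonneg_eq_0_iff)
    hence "z = p" using zV cV pK unfolding d_def by (force simp: fun_eq_iff)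
    thus False using zK pK by simp
  qed
  thus ?thesis using var1 zd by (intro exI[of _ d]) auto
qed




lemma fst_ops: "f \<in> ops k \<Longrightarrow> fst f = k"
  by (auto simp: ops_def)

lemma mem_ops: "(k', f) \<in> ops k \<longleftrightarrow> k' = k \<and> (\<forall>xs. length xs \<noteq> k \<longrightarrow> f xs = undefined)"
  by (auto simp: ops_def)

lemma ops_eqI:
  assumes "F \<in> ops k" "G \<in> ops k" "\<And>xs. length xs = k \<Longrightarrow> snd F xs = snd G xs"
  shows "F = G"
proof -
  obtain a f where F: "F = (a, f)" by (cases F)
  obtain b g where G: "G = (b, g)" by (cases G)
  have "f xs = g xs" for xs
    using assms F G by (cases "length xs = k") (auto simp: ops_def)
  thus ?thesis using assms F G by (auto simp: ops_def fun_eq_iff)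
qed

lemma finite_ops: "finite (ops k :: ('a::finite) oper set)"
proof -
  have fin: "finite {xs::'a list. length xs = k}"
    using finite_lists_length_eq[of "UNIV::'a set" k] by simp
  have "ops k = (\<lambda>f. (k, f)) ` (PiE {xs::'a list. length xs = k} (\<lambda>_. UNIV))"
    by (auto simp: ops_def PiE_def extensional_def image_iff)
  thus ?thesis using fin by (simp add: finite_PiE)
qed

lemma proj_ops: "proj k i \<in> ops k"
  by (auto simp: proj_def ops_def)

lemma projs_ops: "projs k \<subseteq> ops k"
  by (auto simp: projs_def proj_ops)

lemma comp_op_ops: "comp_op F gs l \<in> ops l"
  by (auto simp: comp_op_def ops_def)

lemma proj_in_all_projs: "i < k \<Longrightarrow> proj k i \<in> all_projs"
  by (auto simp: all_projs_def projs_def)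

lemma all_projs_ops: "f \<in> all_projs \<Longrightarrow> f \<in> ops k \<Longrightarrow> f \<in> projs k"
  by (auto simp: all_projs_def projs_def proj_def ops_def)

lemma comp_proj:
  assumes "i < length gs" "gs ! i \<in> ops l" "n = length gs"
  shows "comp_op (proj n i) gs l = gs ! i"
  using assms by (intro ops_eqI[OF comp_op_ops]) (auto simp: comp_op_def proj_def)

lemma comp_id:
  assumes "f \<in> ops k"
  shows "comp_op f (map (proj k) [0..<k]) k = f"
proof (rule ops_eqI[OF comp_op_ops assms])
  fix xs :: "'a list" assume "length xs = k"
  hence "map (\<lambda>g. snd g xs) (map (proj k) [0..<k]) = xs"
    by (auto simp: proj_def intro: nth_equalityI)
  thus "snd (comp_op f (map (proj k) [0..<k]) k) xs = snd f xs"
    using \<open>length xs = k\<close> by (simp add: comp_op_def)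
qed

lemma comp_assoc:
  assumes "length gs = N"
  shows "comp_op (comp_op f hs N) gs l = comp_op f (map (\<lambda>h. comp_op h gs l) hs) l"
  using assms by (auto simp: comp_op_def fun_eq_iff o_def)

lemma app_comp:
  assumes "length xs = l"
  shows "app_op (comp_op f gs l) m xs = app_op f m (map (\<lambda>g. app_op g m xs) gs)"
  using assms by (auto simp: app_op_def comp_op_def o_def)

lemma app_proj:
  assumes "i < k" "length xs = k" "length (xs ! i) = m"
  shows "app_op (proj k i) m xs = xs ! i"
  using assms by (auto simp: app_op_def proj_def intro: nth_equalityI)

lemma proj_in_projs: "i < k \<Longrightarrow> proj k i \<in> projs k"
  by (auto simp: projs_def)

lemma weightingD:
  assumes "is_weighting (k, \<omega>)"
  shows "k \<ge> 1" "\<And>f. f \<notin> ops k \<Longrightarrow> \<omega> f = 0" "sum \<omega> (ops k) = 0"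
    "\<And>f. f \<in> ops k \<Longrightarrow> \<omega> f < 0 \<Longrightarrow> f \<in> projs k"
  using assms by (auto simp: is_weighting_def)

lemma weighting_nonneg:
  assumes "is_weighting (k, \<omega>)" "f \<notin> projs k"
  shows "\<omega> f \<ge> 0"
proof (cases "f \<in> ops k")
  case True
  thus ?thesis using weightingD(4)[OF assms(1), of f] assms(2) by linarith
next
  case False
  thus ?thesis using weightingD(2)[OF assms(1), of f] by simp
qed

lemma wsupp_ops:
  assumes "is_weighting (k, \<omega>)"
  shows "wsupp (k, \<omega>) \<subseteq> ops k"
  using weightingD[OF assms] projs_ops by (force simp: wsupp_def)

lemma not_wsupp_zero:
  assumes "is_weighting (k, \<omega>)" "f \<notin> wsupp (k, \<omega>)"
  shows "\<omega> f = 0"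
  using weighting_nonneg[OF assms(1), of f] assms(2) by (auto simp: wsupp_def)

lemma is_weightingI:
  assumes "k \<ge> 1" "\<And>f. f \<notin> ops k \<Longrightarrow> \<omega> f = 0" "sum \<omega> (ops k) = 0"
    "\<And>f. f \<in> ops k \<Longrightarrow> f \<notin> projs k \<Longrightarrow> \<omega> f \<ge> 0"
  shows "is_weighting (k, \<omega>)"
  using assms unfolding is_weighting_def by force

lemma wsup_simps: "fst (wsup W gs l) = l"
  "snd (wsup W gs l) f' = (\<Sum>f \<in> {f \<in> ops (fst W). comp_op f gs l = f'}. snd W f)"
  by (simp_all add: wsup_def)

lemma wsup_out:
  assumes "f' \<notin> ops l"
  shows "snd (wsup W gs l) f' = 0"
proof -
  have "comp_op f gs l \<noteq> f'" for f using assms comp_op_ops by metis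
  hence E: "{f \<in> ops (fst W). comp_op f gs l = f'} = {}" by blast
  show ?thesis by (simp only: wsup_def snd_conv E sum.empty)
qed

lemma wsup_inner:
  fixes gs :: "('a::finite) oper list"
  shows "(\<Sum>f'\<in>ops l. snd (wsup (n, \<mu>) gs l) f' * c f') = (\<Sum>f\<in>ops n. \<mu> f * c (comp_op f gs l))"
proof -
  have "(\<Sum>f'\<in>ops l. snd (wsup (n, \<mu>) gs l) f' * c f')
      = (\<Sum>f'\<in>ops l. \<Sum>f\<in>{f \<in> ops n. comp_op f gs l = f'}. \<mu> f * c (comp_op f gs l))"
    by (simp add: wsup_def sum_distrib_right)
  also have "\<dots> = (\<Sum>f\<in>ops n. \<mu> f * c (comp_op f gs l))"
    by (rule sum.group) (auto simp: finite_ops comp_op_ops)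
  finally show ?thesis .
qed

lemma wsup_sum:
  fixes gs :: "('a::finite) oper list"
  shows "sum (snd (wsup (n, \<mu>) gs l)) (ops l) = sum \<mu> (ops n)"
  using wsup_inner[where c="\<lambda>_. 1"] by simp

lemma wsup_wsup:
  fixes gs :: "('a::finite) oper list"
  assumes "length gs = N"
  shows "wsup (wsup (n, \<mu>) hs N) gs l = wsup (n, \<mu>) (map (\<lambda>h. comp_op h gs l) hs) l"
proof -
  have "snd (wsup (wsup (n, \<mu>) hs N) gs l) f'' = snd (wsup (n, \<mu>) (map (\<lambda>h. comp_op h gs l) hs) l) f''" for f''
  proof -
    have "snd (wsup (wsup (n, \<mu>) hs N) gs l) f''
       = (\<Sum>f'\<in>ops N. snd (wsup (n, \<mu>) hs N) f' * (if comp_op f' gs l = f'' then 1 else 0))"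
      by (simp add: wsup_def sum.inter_filter[symmetric] finite_ops if_distrib cong: if_cong)
    also have "\<dots> = (\<Sum>f\<in>ops n. \<mu> f * (if comp_op (comp_op f hs N) gs l = f'' then 1 else 0))"
      by (rule wsup_inner)
    also have "\<dots> = (\<Sum>f\<in>{f\<in>ops n. comp_op f (map (\<lambda>h. comp_op h gs l) hs) l = f''}. \<mu> f)"
      using assms by (simp add: comp_assoc sum.inter_filter[symmetric] finite_ops if_distrib cong: if_cong)
    finally show ?thesis by (simp add: wsup_def)
  qed
  thus ?thesis by (simp add: wsup_def)
qed

lemma wsup_add:
  "wsup (n, \<lambda>f. \<mu>1 f + \<mu>2 f) gs l = (l, \<lambda>f. snd (wsup (n, \<mu>1) gs l) f + snd (wsup (n, \<mu>2) gs l) f)"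
  by (simp add: wsup_def sum.distrib)

lemma wsup_scale:
  "wsup (n, \<lambda>f. c * \<mu> f) gs l = (l, \<lambda>f. c * snd (wsup (n, \<mu>) gs l) f)"
  by (simp add: wsup_def sum_distrib_left)

lemma wsup_id:
  assumes "is_weighting (k, \<omega>)"
  shows "wsup (k, \<omega>) (map (proj k) [0..<k]) k = (k, \<omega>)"
proof -
  have "snd (wsup (k, \<omega>) (map (proj k) [0..<k]) k) f' = \<omega> f'" for f'
  proof (cases "f' \<in> ops k")
    case True
    hence "{f \<in> ops k. comp_op f (map (proj k) [0..<k]) k = f'} = {f'}"
      using comp_id by auto
    thus ?thesis by (simp add: wsup_def)
  next
    case False thus ?thesis using wsup_out weightingD(2)[OF assms] by metis
  qed
  thus ?thesis by (simp add: wsup_def fun_eq_iff)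
qed




lemma wrelsD: "R \<in> wrels \<Longrightarrow> fst R \<ge> 1 \<and> (\<forall>x. snd R x \<noteq> -\<infinity>) \<and> (\<forall>x. length x \<noteq> fst R \<longrightarrow> snd R x = \<infinity>)"
  by (auto simp: wrels_def)

lemma feasD: "y \<in> feas R \<Longrightarrow> length y = fst R \<and> snd R y < \<infinity>"
  by (auto simp: feas_def)

lemma Pol_iff:
  assumes "F \<in> ops k"
  shows "F \<in> Pol R \<longleftrightarrow> (\<forall>xs. length xs = k \<longrightarrow> set xs \<subseteq> feas R \<longrightarrow> app_op F (fst R) xs \<in> feas R)"
proof -
  have e: "F \<in> ops k' \<longleftrightarrow> k' = k" for k' using assms by (auto dest: fst_ops)
  have "F \<in> Pol R \<longleftrightarrow> (\<exists>k'. F \<in> ops k' \<and> (\<forall>xs. length xs = k' \<longrightarrow> set xs \<subseteq> feas R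
              \<longrightarrow> app_op F (fst R) xs \<in> feas R))" by (simp add: Pol_def)
  also have "\<dots> \<longleftrightarrow> (\<forall>xs. length xs = k \<longrightarrow> set xs \<subseteq> feas R \<longrightarrow> app_op F (fst R) xs \<in> feas R)"
    by (simp add: e)
  finally show ?thesis .
qed

lemma projs_Pol: "projs k \<subseteq> Pol (R :: 'a wrel)"
proof
  fix f :: "'a oper" assume "f \<in> projs k"
  then obtain i where i: "i < k" "f = proj k i" by (auto simp: projs_def)
  have fk: "f \<in> ops k" using i proj_ops by simp
  show "f \<in> Pol R" unfolding Pol_iff[OF fk]
  proof (intro allI impI)
    fix xs :: "'a list list" assume xs: "length xs = k" "set xs \<subseteq> feas R"
    hence "xs ! i \<in> feas R" using i by auto
    moreover hence "app_op f (fst R) xs = xs ! i" using i xs by (simp add: app_proj feasD)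
    ultimately show "app_op f (fst R) xs \<in> feas R" by simp
  qed
qed

lemma comp_Pol:
  assumes f: "f \<in> Pol R" "f \<in> ops n" and gs: "set gs \<subseteq> Pol R \<inter> ops l" "length gs = n"
  shows "comp_op f gs l \<in> Pol R"
proof (subst Pol_iff[OF comp_op_ops], intro allI impI)
  fix xs :: "'a list list" assume xs: "length xs = l" "set xs \<subseteq> feas R"
  have eq: "app_op (comp_op f gs l) (fst R) xs = app_op f (fst R) (map (\<lambda>g. app_op g (fst R) xs) gs)"
    by (rule app_comp[OF xs(1)])
  have sub: "set (map (\<lambda>g. app_op g (fst R) xs) gs) \<subseteq> feas R"
  proof
    fix y assume "y \<in> set (map (\<lambda>g. app_op g (fst R) xs) gs)"
    then obtain g where g: "g \<in> set gs" "y = app_op g (fst R) xs" by auto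
    hence "g \<in> Pol R" "g \<in> ops l" using gs by auto
    thus "y \<in> feas R" using Pol_iff[of g l R] xs g by blast
  qed
  have len: "length (map (\<lambda>g. app_op g (fst R) xs) gs) = n" using gs by simp
  have "\<forall>xs. length xs = n \<longrightarrow> set xs \<subseteq> feas R \<longrightarrow> app_op f (fst R) xs \<in> feas R"
    using f Pol_iff[of f n R] by blast
  hence "app_op f (fst R) (map (\<lambda>g. app_op g (fst R) xs) gs) \<in> feas R" using sub len by blast
  thus "app_op (comp_op f gs l) (fst R) xs \<in> feas R" using eq by simp
qed

lemma improves_iff:
  fixes \<omega> :: "('a::finite) oper \<Rightarrow> real"
  assumes W: "is_weighting (k, \<omega>)" and R: "R \<in> wrels"
  shows "improves (k, \<omega>) R \<longleftrightarrow> (\<forall>f\<in>ops k. f \<notin> Pol R \<longrightarrow> \<omega> f \<le> 0) \<and>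
     (\<forall>xs. length xs = k \<longrightarrow> set xs \<subseteq> feas R \<longrightarrow>
        (\<Sum>f\<in>ops k. \<omega> f * real_of_ereal (snd R (app_op f (fst R) xs))) \<le> 0)"
proof -
  have A: "wsupp (k, \<omega>) \<subseteq> Pol R \<longleftrightarrow> (\<forall>f\<in>ops k. f \<notin> Pol R \<longrightarrow> \<omega> f \<le> 0)"
  proof
    assume "wsupp (k, \<omega>) \<subseteq> Pol R"
    thus "\<forall>f\<in>ops k. f \<notin> Pol R \<longrightarrow> \<omega> f \<le> 0" by (force simp: wsupp_def)
  next
    assume H: "\<forall>f\<in>ops k. f \<notin> Pol R \<longrightarrow> \<omega> f \<le> 0"
    show "wsupp (k, \<omega>) \<subseteq> Pol R"
    proof
      fix f assume "f \<in> wsupp (k, \<omega>)"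
      hence "f \<in> projs k \<or> (\<omega> f > 0 \<and> f \<in> ops k)"
        using weightingD(2)[OF W, of f] by (cases "f \<in> ops k") (auto simp: wsupp_def)
      thus "f \<in> Pol R"
      proof (elim disjE)
        assume "f \<in> projs k" thus ?thesis using projs_Pol by blast
      next
        assume "0 < \<omega> f \<and> f \<in> ops k" thus ?thesis using H by (meson not_le)
      qed
    qed
  qed
  have B: "(\<Sum>f \<in> wsupp (k, \<omega>). ereal (\<omega> f) * snd R (app_op f (fst R) xs))
      = ereal (\<Sum>f\<in>ops k. \<omega> f * real_of_ereal (snd R (app_op f (fst R) xs)))"
    if sub: "wsupp (k, \<omega>) \<subseteq> Pol R" and xs: "length xs = k" "set xs \<subseteq> feas R" for xs
  proof -
    have "(\<Sum>f \<in> wsupp (k, \<omega>). ereal (\<omega> f) * snd R (app_op f (fst R) xs))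
       = (\<Sum>f \<in> wsupp (k, \<omega>). ereal (\<omega> f * real_of_ereal (snd R (app_op f (fst R) xs))))"
    proof (rule sum.cong[OF refl])
      fix f assume f: "f \<in> wsupp (k, \<omega>)"
      hence "f \<in> ops k" using wsupp_ops[OF W] by blast
      hence "app_op f (fst R) xs \<in> feas R" using f sub xs Pol_iff by blast
      hence "snd R (app_op f (fst R) xs) < \<infinity>" "snd R (app_op f (fst R) xs) \<noteq> -\<infinity>"
        using feasD[of "app_op f (fst R) xs" R] wrelsD[OF R] by auto
      hence "snd R (app_op f (fst R) xs) = ereal (real_of_ereal (snd R (app_op f (fst R) xs)))"
        by (cases "snd R (app_op f (fst R) xs)") auto
      thus "ereal (\<omega> f) * snd R (app_op f (fst R) xs) = ereal (\<omega> f * real_of_ereal (snd R (app_op f (fst R) xs)))"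
        by (metis times_ereal.simps(1))
    qed
    also have "\<dots> = ereal (\<Sum>f \<in> wsupp (k, \<omega>). \<omega> f * real_of_ereal (snd R (app_op f (fst R) xs)))"
      by simp
    also have "(\<Sum>f \<in> wsupp (k, \<omega>). \<omega> f * real_of_ereal (snd R (app_op f (fst R) xs)))
        = (\<Sum>f\<in>ops k. \<omega> f * real_of_ereal (snd R (app_op f (fst R) xs)))"
      by (rule sum.mono_neutral_left) (auto simp: finite_ops wsupp_ops[OF W] not_wsupp_zero[OF W])
    finally show ?thesis .
  qed
  show ?thesis
    unfolding improves_def fst_conv using A B by auto
qed

lemma zero_weighting: "k \<ge> 1 \<Longrightarrow> is_weighting (k, \<lambda>_. 0)"
  by (rule is_weightingI) auto

lemma closed_imp_const: "closed {x. Q x} \<Longrightarrow> closed {x. c \<longrightarrow> Q x}"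
  by (cases c) auto

lemma closed_weightings_k:
  fixes k :: nat
  shows "closed {\<omega> :: ('a::finite) oper \<Rightarrow> real. is_weighting (k, \<omega>)}"
proof (cases "k \<ge> 1")
  case False
  hence "{\<omega> :: 'a oper \<Rightarrow> real. is_weighting (k, \<omega>)} = {}" by (auto simp: is_weighting_def)
  thus ?thesis by simp
next
  case True
  have "{\<omega> :: 'a oper \<Rightarrow> real. is_weighting (k, \<omega>)} =
     {\<omega>. (\<forall>f. f \<notin> ops k \<longrightarrow> \<omega> f = 0) \<and> sum \<omega> (ops k) = 0 \<and> (\<forall>f. f \<in> ops k \<longrightarrow> f \<notin> projs k \<longrightarrow> 0 \<le> \<omega> f)}"
    using True by (auto simp: is_weighting_def not_le[symmetric])
  also have "closed \<dots>"
    by (intro closed_Collect_conj closed_Collect_all closed_imp_const closed_Collect_eq closed_Collect_le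
         continuous_on_product_coordinates continuous_on_const continuous_on_sum)
  finally show ?thesis .
qed

lemma wPol_wclone:
  fixes \<Gamma> :: "('a::finite) wrel set"
  assumes G: "\<Gamma> \<subseteq> wrels"
  shows "wclone (wPol \<Gamma>)"
proof -
  have mem: "W \<in> wPol \<Gamma> \<longleftrightarrow> is_weighting W \<and> (\<forall>R\<in>\<Gamma>. improves W R)" for W
    by (simp add: wPol_def weightings_def)
  have ne: "(1, \<lambda>_. 0) \<in> wPol \<Gamma>"
    unfolding mem using zero_weighting[of 1] improves_iff[OF zero_weighting[of 1]] G by auto
  have sc: "(k, \<lambda>f. c * \<omega> f) \<in> wPol \<Gamma>" if W: "(k, \<omega>) \<in> wPol \<Gamma>" and c: "c \<ge> 0" for k \<omega> c
  proof -
    have w: "is_weighting (k, \<omega>)" using W mem by blast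
    have w': "is_weighting (k, \<lambda>f. c * \<omega> f)"
      using weightingD[OF w] c weighting_nonneg[OF w]
      by (intro is_weightingI) (auto simp: sum_distrib_left[symmetric])
    show ?thesis unfolding mem
    proof (intro conjI ballI w')
      fix R assume R: "R \<in> \<Gamma>"
      hence R': "R \<in> wrels" using G by blast
      have "improves (k, \<omega>) R" using W R mem by blast
      hence H: "(\<forall>f\<in>ops k. f \<notin> Pol R \<longrightarrow> \<omega> f \<le> 0) \<and>
           (\<forall>xs. length xs = k \<longrightarrow> set xs \<subseteq> feas R \<longrightarrow>
            (\<Sum>f\<in>ops k. \<omega> f * real_of_ereal (snd R (app_op f (fst R) xs))) \<le> 0)"
        using improves_iff[OF w R'] by blast
      show "improves (k, \<lambda>f. c * \<omega> f) R"
        unfolding improves_iff[OF w' R']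
      proof (intro conjI ballI allI impI)
        fix f assume "f \<in> ops k" "f \<notin> Pol R"
        hence "\<omega> f \<le> 0" using H by blast
        thus "c * \<omega> f \<le> 0" using c by (simp add: mult_nonneg_nonpos)
      next
        fix xs :: "'a list list" assume xs: "length xs = k" "set xs \<subseteq> feas R"
        have "(\<Sum>f\<in>ops k. c * \<omega> f * real_of_ereal (snd R (app_op f (fst R) xs)))
            = c * (\<Sum>f\<in>ops k. \<omega> f * real_of_ereal (snd R (app_op f (fst R) xs)))"
          by (simp add: sum_distrib_left mult.assoc)
        also have "\<dots> \<le> 0"
        proof -
          have "(\<Sum>f\<in>ops k. \<omega> f * real_of_ereal (snd R (app_op f (fst R) xs))) \<le> 0" using H xs by blast
          thus ?thesis using c by (simp add: mult_nonneg_nonpos)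
        qed
        finally show "(\<Sum>f\<in>ops k. c * \<omega> f * real_of_ereal (snd R (app_op f (fst R) xs))) \<le> 0" .
      qed
    qed
  qed
  have ad: "(k, \<lambda>f. \<omega>1 f + \<omega>2 f) \<in> wPol \<Gamma>" if W1: "(k, \<omega>1) \<in> wPol \<Gamma>" and W2: "(k, \<omega>2) \<in> wPol \<Gamma>" for k \<omega>1 \<omega>2
  proof -
    have w1: "is_weighting (k, \<omega>1)" and w2: "is_weighting (k, \<omega>2)" using W1 W2 mem by blast+
    have w': "is_weighting (k, \<lambda>f. \<omega>1 f + \<omega>2 f)"
      using weightingD[OF w1] weightingD[OF w2] weighting_nonneg[OF w1] weighting_nonneg[OF w2]
      by (intro is_weightingI) (auto simp: sum.distrib)
    show ?thesis unfolding mem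
    proof (intro conjI ballI w')
      fix R assume R: "R \<in> \<Gamma>"
      hence R': "R \<in> wrels" using G by blast
      have H1: "(\<forall>f\<in>ops k. f \<notin> Pol R \<longrightarrow> \<omega>1 f \<le> 0) \<and>
           (\<forall>xs. length xs = k \<longrightarrow> set xs \<subseteq> feas R \<longrightarrow>
            (\<Sum>f\<in>ops k. \<omega>1 f * real_of_ereal (snd R (app_op f (fst R) xs))) \<le> 0)"
        using improves_iff[OF w1 R'] W1 R mem by blast
      have H2: "(\<forall>f\<in>ops k. f \<notin> Pol R \<longrightarrow> \<omega>2 f \<le> 0) \<and>
           (\<forall>xs. length xs = k \<longrightarrow> set xs \<subseteq> feas R \<longrightarrow>
            (\<Sum>f\<in>ops k. \<omega>2 f * real_of_ereal (snd R (app_op f (fst R) xs))) \<le> 0)"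
        using improves_iff[OF w2 R'] W2 R mem by blast
      show "improves (k, \<lambda>f. \<omega>1 f + \<omega>2 f) R"
        unfolding improves_iff[OF w' R']
      proof (intro conjI ballI allI impI)
        fix f assume "f \<in> ops k" "f \<notin> Pol R"
        hence "\<omega>1 f \<le> 0" "\<omega>2 f \<le> 0" using H1 H2 by blast+
        thus "\<omega>1 f + \<omega>2 f \<le> 0" by linarith
      next
        fix xs :: "'a list list" assume xs: "length xs = k" "set xs \<subseteq> feas R"
        have "(\<Sum>f\<in>ops k. (\<omega>1 f + \<omega>2 f) * real_of_ereal (snd R (app_op f (fst R) xs)))
            = (\<Sum>f\<in>ops k. \<omega>1 f * real_of_ereal (snd R (app_op f (fst R) xs)))
              + (\<Sum>f\<in>ops k. \<omega>2 f * real_of_ereal (snd R (app_op f (fst R) xs)))"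
          by (simp add: sum.distrib distrib_right)
        also have "\<dots> \<le> 0"
        proof -
          have "(\<Sum>f\<in>ops k. \<omega>1 f * real_of_ereal (snd R (app_op f (fst R) xs))) \<le> 0" using H1 xs by blast
          moreover have "(\<Sum>f\<in>ops k. \<omega>2 f * real_of_ereal (snd R (app_op f (fst R) xs))) \<le> 0" using H2 xs by blast
          ultimately show ?thesis by linarith
        qed
        finally show "(\<Sum>f\<in>ops k. (\<omega>1 f + \<omega>2 f) * real_of_ereal (snd R (app_op f (fst R) xs))) \<le> 0" .
      qed
    qed
  qed
  have su: "wsup W gs l \<in> wPol \<Gamma>"
    if W: "W \<in> wPol \<Gamma>" and l: "l \<ge> 1" and len: "length gs = fst W"
      and gs: "set gs \<subseteq> wsupp_set (wPol \<Gamma>) \<inter> ops l" and ws: "is_weighting (wsup W gs l)" for W gs l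
  proof -
    obtain k \<omega> where Wk: "W = (k, \<omega>)" by (cases W)
    have w: "is_weighting (k, \<omega>)" using W mem Wk by blast
    define \<nu> where "\<nu> = snd (wsup W gs l)"
    have wsupeq: "wsup W gs l = (l, \<nu>)" by (simp add: \<nu>_def wsup_def)
    have wn: "is_weighting (l, \<nu>)" using ws wsupeq by simp
    show ?thesis unfolding mem
    proof (intro conjI ballI ws)
      fix R assume R: "R \<in> \<Gamma>"
      hence R': "R \<in> wrels" using G by blast
      have H: "(\<forall>f\<in>ops k. f \<notin> Pol R \<longrightarrow> \<omega> f \<le> 0) \<and>
           (\<forall>xs. length xs = k \<longrightarrow> set xs \<subseteq> feas R \<longrightarrow>
            (\<Sum>f\<in>ops k. \<omega> f * real_of_ereal (snd R (app_op f (fst R) xs))) \<le> 0)"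
        using improves_iff[OF w R'] W R mem Wk by blast
      have gsP: "set gs \<subseteq> Pol R \<inter> ops l"
      proof
        fix g assume g: "g \<in> set gs"
        hence gl: "g \<in> ops l" using gs by blast
        from g gs have "g \<in> all_projs \<or> (\<exists>W'\<in>wPol \<Gamma>. g \<in> wsupp W')" by (auto simp: wsupp_set_def)
        hence "g \<in> Pol R"
        proof
          assume "g \<in> all_projs"
          thus ?thesis using all_projs_ops[OF _ gl] projs_Pol by blast
        next
          assume "\<exists>W'\<in>wPol \<Gamma>. g \<in> wsupp W'"
          then obtain W' where "W' \<in> wPol \<Gamma>" "g \<in> wsupp W'" by blast
          hence "improves W' R" using R mem by blast
          thus ?thesis using \<open>g \<in> wsupp W'\<close> unfolding improves_def by blast
        qed
        thus "g \<in> Pol R \<inter> ops l" using gl by blast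
      qed
      have lenk: "length gs = k" using len Wk by simp
      show "improves (wsup W gs l) R"
        unfolding wsupeq improves_iff[OF wn R']
      proof (intro conjI ballI allI impI)
        fix f' assume f': "f' \<in> ops l" "f' \<notin> Pol R"
        show "\<nu> f' \<le> 0"
        proof (rule ccontr)
          assume "\<not> \<nu> f' \<le> 0"
          hence "0 < (\<Sum>f \<in> {f \<in> ops k. comp_op f gs l = f'}. \<omega> f)"
            by (simp add: \<nu>_def wsup_def Wk)
          hence "\<exists>f\<in>{f \<in> ops k. comp_op f gs l = f'}. \<omega> f > 0"
            using sum_nonpos[of "{f \<in> ops k. comp_op f gs l = f'}" \<omega>] by (meson not_le)
          then obtain f where f: "f \<in> ops k" "comp_op f gs l = f'" "\<omega> f > 0"
            by blast
          hence "f \<in> Pol R" using H by force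
          hence "comp_op f gs l \<in> Pol R" using comp_Pol[OF _ f(1) gsP lenk] by blast
          thus False using f f' by simp
        qed
      next
        fix xs :: "'a list list" assume xs: "length xs = l" "set xs \<subseteq> feas R"
        have "(\<Sum>f'\<in>ops l. \<nu> f' * real_of_ereal (snd R (app_op f' (fst R) xs)))
            = (\<Sum>f\<in>ops k. \<omega> f * real_of_ereal (snd R (app_op (comp_op f gs l) (fst R) xs)))"
          unfolding \<nu>_def Wk by (rule wsup_inner)
        also have "\<dots> = (\<Sum>f\<in>ops k. \<omega> f * real_of_ereal (snd R (app_op f (fst R) (map (\<lambda>g. app_op g (fst R) xs) gs))))"
          using xs by (simp add: app_comp)
        also have "\<dots> \<le> 0"
        proof -
          have "set (map (\<lambda>g. app_op g (fst R) xs) gs) \<subseteq> feas R"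
          proof
            fix y assume "y \<in> set (map (\<lambda>g. app_op g (fst R) xs) gs)"
            then obtain g where g: "g \<in> set gs" "y = app_op g (fst R) xs" by auto
            hence "g \<in> Pol R" "g \<in> ops l" using gsP by auto
            thus "y \<in> feas R" using Pol_iff[of g l R] xs g by blast
          qed
          moreover have "length (map (\<lambda>g. app_op g (fst R) xs) gs) = k" using lenk by simp
          ultimately show ?thesis using H by blast
        qed
        finally show "(\<Sum>f'\<in>ops l. \<nu> f' * real_of_ereal (snd R (app_op f' (fst R) xs))) \<le> 0" .
      qed
    qed
  qed
  have cl: "closed {\<omega>. (k, \<omega>) \<in> wPol \<Gamma>}" for k
  proof -
    have "{\<omega>. (k, \<omega>) \<in> wPol \<Gamma>} = {\<omega>. is_weighting (k, \<omega>)} \<inter>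
       {\<omega>. \<forall>R. R \<in> \<Gamma> \<longrightarrow> ((\<forall>f. f \<in> ops k \<longrightarrow> f \<notin> Pol R \<longrightarrow> \<omega> f \<le> 0) \<and>
           (\<forall>xs. length xs = k \<longrightarrow> set xs \<subseteq> feas R \<longrightarrow>
            (\<Sum>f\<in>ops k. \<omega> f * real_of_ereal (snd R (app_op f (fst R) xs))) \<le> 0))}"
      using improves_iff G unfolding mem by blast
    also have "closed \<dots>"
      by (intro closed_Int closed_weightings_k closed_Collect_conj closed_Collect_all closed_imp_const
          closed_Collect_le continuous_on_product_coordinates continuous_on_const continuous_on_sum
          continuous_on_mult_right)
    finally show ?thesis .
  qed
  show ?thesis unfolding wclone_def
  proof (intro conjI)
    show "wPol \<Gamma> \<noteq> {}" using ne by blast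
    show "wPol \<Gamma> \<subseteq> weightings" by (auto simp: wPol_def)
    show "\<forall>(k, \<omega>)\<in>wPol \<Gamma>. \<forall>c. 0 \<le> c \<longrightarrow> (k, \<lambda>f. c * \<omega> f) \<in> wPol \<Gamma>" using sc by blast
    show "\<forall>(k, \<omega>1)\<in>wPol \<Gamma>. \<forall>(k', \<omega>2)\<in>wPol \<Gamma>. k = k' \<longrightarrow> (k, \<lambda>f. \<omega>1 f + \<omega>2 f) \<in> wPol \<Gamma>"
      using ad by blast
    show "\<forall>W\<in>wPol \<Gamma>. \<forall>l gs. 1 \<le> l \<longrightarrow> length gs = fst W \<longrightarrow> set gs \<subseteq> wsupp_set (wPol \<Gamma>) \<inter> ops l \<longrightarrow>
          is_weighting (wsup W gs l) \<longrightarrow> wsup W gs l \<in> wPol \<Gamma>" using su by blast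
    show "\<forall>k. closed {\<omega>. (k, \<omega>) \<in> wPol \<Gamma>}" using cl by blast
  qed
qed

lemma easy_dir:
  fixes \<Omega> :: "('a::finite) weighting set"
  assumes "\<Omega> \<subseteq> weightings"
  shows "wClone \<Omega> \<subseteq> wPol (Imp \<Omega>)"
proof -
  have "wclone (wPol (Imp \<Omega>))" by (rule wPol_wclone) (auto simp: Imp_def)
  moreover have "\<Omega> \<subseteq> wPol (Imp \<Omega>)" using assms by (auto simp: wPol_def Imp_def)
  ultimately show ?thesis unfolding wClone_def by blast
qed




lemma wsup_neg:
  fixes gs :: "('a::finite) oper list"
  assumes w: "is_weighting (n, \<mu>)" and len: "length gs = n" and gl: "set gs \<subseteq> ops l" and h: "h \<notin> set gs"
  shows "snd (wsup (n, \<mu>) gs l) h \<ge> 0"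
proof -
  have *: "\<mu> f \<ge> 0" if f: "f \<in> ops n" "comp_op f gs l = h" for f
  proof (rule ccontr)
    assume "\<not> \<mu> f \<ge> 0"
    hence "\<mu> f < 0" by simp
    hence "f \<in> projs n" using weightingD(4)[OF w] f(1) by blast
    then obtain i where i: "i < n" "f = proj n i" unfolding projs_def by blast
    have gi: "gs ! i \<in> set gs" using len i by simp
    have "gs ! i \<in> ops l" using gl gi by blast
    hence "comp_op (proj n i) gs l = gs ! i" by (intro comp_proj) (simp_all add: i len)
    hence "h = gs ! i" using f(2) i(2) by simp
    thus False using h gi by simp
  qed
  have "snd (wsup (n, \<mu>) gs l) h = (\<Sum>f\<in>{f \<in> ops n. comp_op f gs l = h}. \<mu> f)"
    by (simp add: wsup_def)
  also have "\<dots> \<ge> 0" by (rule sum_nonneg) (use * in blast)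
  finally show ?thesis .
qed

lemma wsup_fst: "wsup W gs l = (l, snd (wsup W gs l))"
  by (simp add: wsup_def)

lemma wsup_proj_weighting:
  fixes gs :: "('a::finite) oper list"
  assumes w: "is_weighting (n, \<mu>)" and l: "l \<ge> 1" and len: "length gs = n" and gp: "set gs \<subseteq> projs l"
  shows "is_weighting (wsup (n, \<mu>) gs l)"
proof -
  have gl: "set gs \<subseteq> ops l" using gp projs_ops by blast
  have "is_weighting (l, snd (wsup (n, \<mu>) gs l))"
  proof (rule is_weightingI)
    show "l \<ge> 1" by fact
    show "snd (wsup (n, \<mu>) gs l) f = 0" if "f \<notin> ops l" for f using wsup_out that by blast
    show "sum (snd (wsup (n, \<mu>) gs l)) (ops l) = 0" using weightingD(3)[OF w] by (simp add: wsup_sum)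
    show "0 \<le> snd (wsup (n, \<mu>) gs l) f" if "f \<in> ops l" "f \<notin> projs l" for f
      using wsup_neg[OF w len gl] that gp by blast
  qed
  thus ?thesis by (subst wsup_fst)
qed

context
  fixes C :: "('a::finite) weighting set" and k :: nat
  assumes wc: "wclone C" and k1: "k \<ge> 1"
begin

lemma C_weighting: "W \<in> C \<Longrightarrow> is_weighting W"
  using wc by (auto simp: wclone_def weightings_def)

lemma C_scale: "(n, \<mu>) \<in> C \<Longrightarrow> c \<ge> 0 \<Longrightarrow> (n, \<lambda>f. c * \<mu> f) \<in> C"
  using wc unfolding wclone_def by blast

lemma C_add: "(n, \<mu>1) \<in> C \<Longrightarrow> (n, \<mu>2) \<in> C \<Longrightarrow> (n, \<lambda>f. \<mu>1 f + \<mu>2 f) \<in> C"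
  using wc unfolding wclone_def by blast

lemma C_sup: "W \<in> C \<Longrightarrow> l \<ge> 1 \<Longrightarrow> length gs = fst W \<Longrightarrow> set gs \<subseteq> wsupp_set C \<inter> ops l
   \<Longrightarrow> is_weighting (wsup W gs l) \<Longrightarrow> wsup W gs l \<in> C"
  using wc unfolding wclone_def by blast

lemma C_closed: "closed {\<omega>. (n, \<omega>) \<in> C}"
  using wc unfolding wclone_def by blast

lemma C_zero:
  assumes "l \<ge> 1"
  shows "(l, \<lambda>_. 0) \<in> C"
proof -
  obtain W where W: "W \<in> C" using wc unfolding wclone_def by blast
  obtain n \<mu> where Wn: "W = (n, \<mu>)" by (cases W)
  have n1: "n \<ge> 1" using C_weighting[OF W] Wn weightingD(1) by blast
  have z: "(n, \<lambda>_. 0) \<in> C" using C_scale[of n \<mu> 0] W Wn by simp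
  define gs where "gs = replicate n (proj l 0 :: 'a oper)"
  have gsset: "set gs = {proj l 0}" using n1 by (simp add: gs_def)
  have "wsup (n, \<lambda>_. 0) gs l = (l, \<lambda>_. 0)" by (simp add: wsup_def)
  moreover have "wsup (n, \<lambda>_. 0) gs l \<in> C"
  proof (rule C_sup[OF z assms])
    show "length gs = fst (n, \<lambda>_. 0 :: real)" by (simp add: gs_def)
    show "set gs \<subseteq> wsupp_set C \<inter> ops l"
      using gsset assms proj_in_all_projs[of 0 l] proj_ops[of l 0] by (auto simp: wsupp_set_def)
    show "is_weighting (wsup (n, \<lambda>_. 0) gs l)"
      using \<open>wsup (n, \<lambda>_. 0) gs l = (l, \<lambda>_. 0)\<close> zero_weighting[OF assms] by simp
  qed
  ultimately show ?thesis by simp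
qed

definition SS :: "'a oper set" where "SS = wsupp_set C \<inter> ops k"

lemma SS_ops: "SS \<subseteq> ops k" by (auto simp: SS_def)

lemma finite_SS: "finite SS" using finite_subset[OF SS_ops finite_ops] .

lemma proj_SS: "i < k \<Longrightarrow> proj k i \<in> SS"
  using proj_in_all_projs proj_ops by (auto simp: SS_def wsupp_set_def)

lemma projs_SS: "projs k \<subseteq> SS"
  using proj_SS by (auto simp: projs_def)

definition LL :: "('a oper \<Rightarrow> real) set" where
  "LL = {\<nu>. \<exists>W gs. W \<in> C \<and> set gs \<subseteq> SS \<and> length gs = fst W \<and> \<nu> = snd (wsup W gs k)}"

lemma LL_out: "\<nu> \<in> LL \<Longrightarrow> f \<notin> ops k \<Longrightarrow> \<nu> f = 0"
  unfolding LL_def using wsup_out by blast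

lemma LL_sum: "\<nu> \<in> LL \<Longrightarrow> sum \<nu> (ops k) = 0"
proof -
  assume "\<nu> \<in> LL"
  then obtain W gs where W: "W \<in> C" "\<nu> = snd (wsup W gs k)" by (auto simp: LL_def)
  obtain n \<mu> where Wn: "W = (n, \<mu>)" by (cases W)
  have "sum \<mu> (ops n) = 0" using weightingD(3)[OF C_weighting[OF W(1)[unfolded Wn]]] .
  thus ?thesis using W Wn by (simp add: wsup_sum)
qed

lemma LL_neg: "\<nu> \<in> LL \<Longrightarrow> h \<notin> SS \<Longrightarrow> \<nu> h \<ge> 0"
proof -
  assume "\<nu> \<in> LL" "h \<notin> SS"
  then obtain W gs where W: "W \<in> C" "set gs \<subseteq> SS" "length gs = fst W" "\<nu> = snd (wsup W gs k)"
    by (auto simp: LL_def)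
  obtain n \<mu> where Wn: "W = (n, \<mu>)" by (cases W)
  have "h \<notin> set gs" using W \<open>h \<notin> SS\<close> by blast
  thus ?thesis using wsup_neg[of n \<mu> gs k h] W Wn C_weighting SS_ops by auto
qed

lemma LL_C: "(k, \<kappa>) \<in> C \<Longrightarrow> \<kappa> \<in> LL"
proof -
  assume K: "(k, \<kappa>) \<in> C"
  have "wsup (k, \<kappa>) (map (proj k) [0..<k]) k = (k, \<kappa>)"
    using wsup_id C_weighting[OF K] by blast
  moreover have "set (map (proj k) [0..<k]) \<subseteq> SS" using proj_SS by auto
  ultimately show ?thesis unfolding LL_def using K
    by (intro CollectI exI[of _ "(k, \<kappa>)"] exI[of _ "map (proj k) [0..<k]"]) auto
qed

lemma LL_zero: "(\<lambda>_. 0) \<in> LL"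
  using LL_C C_zero k1 by blast

lemma LL_scale: "\<nu> \<in> LL \<Longrightarrow> c \<ge> 0 \<Longrightarrow> (\<lambda>f. c * \<nu> f) \<in> LL"
proof -
  assume "\<nu> \<in> LL" "c \<ge> 0"
  then obtain W gs where W: "W \<in> C" "set gs \<subseteq> SS" "length gs = fst W" "\<nu> = snd (wsup W gs k)"
    by (auto simp: LL_def)
  obtain n \<mu> where Wn: "W = (n, \<mu>)" by (cases W)
  have "(n, \<lambda>f. c * \<mu> f) \<in> C" using C_scale W Wn \<open>c \<ge> 0\<close> by blast
  moreover have "(\<lambda>f. c * \<nu> f) = snd (wsup (n, \<lambda>f. c * \<mu> f) gs k)"
    using W Wn by (simp add: wsup_scale)
  ultimately show ?thesis unfolding LL_def using W Wn
    by (intro CollectI exI[of _ "(n, \<lambda>f. c * \<mu> f)"] exI[of _ gs]) auto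
qed

lemma LL_add: "\<nu>1 \<in> LL \<Longrightarrow> \<nu>2 \<in> LL \<Longrightarrow> (\<lambda>f. \<nu>1 f + \<nu>2 f) \<in> LL"
proof -
  assume "\<nu>1 \<in> LL" "\<nu>2 \<in> LL"
  then obtain W1 gs1 W2 gs2 where W1: "W1 \<in> C" "set gs1 \<subseteq> SS" "length gs1 = fst W1" "\<nu>1 = snd (wsup W1 gs1 k)"
    and W2: "W2 \<in> C" "set gs2 \<subseteq> SS" "length gs2 = fst W2" "\<nu>2 = snd (wsup W2 gs2 k)"
    by (auto simp: LL_def)
  obtain n1 \<mu>1 where Wn1: "W1 = (n1, \<mu>1)" by (cases W1)
  obtain n2 \<mu>2 where Wn2: "W2 = (n2, \<mu>2)" by (cases W2)
  have w1: "is_weighting (n1, \<mu>1)" using C_weighting W1 Wn1 by blast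
  have w2: "is_weighting (n2, \<mu>2)" using C_weighting W2 Wn2 by blast
  define N where "N = n1 + n2"
  have N1: "N \<ge> 1" using weightingD(1)[OF w1] N_def by simp
  define hs1 :: "'a oper list" where "hs1 = map (proj N) [0..<n1]"
  define hs2 :: "'a oper list" where "hs2 = map (\<lambda>i. proj N (n1 + i)) [0..<n2]"
  have hs1p: "set hs1 \<subseteq> projs N" by (auto simp: hs1_def N_def projs_def)
  have hs2p: "set hs2 \<subseteq> projs N" by (auto simp: hs2_def N_def projs_def)
  have hsC: "set hs \<subseteq> wsupp_set C \<inter> ops N" if "set hs \<subseteq> projs N" for hs
    using that projs_ops by (auto simp: wsupp_set_def all_projs_def)
  define \<phi>1 where "\<phi>1 = snd (wsup (n1, \<mu>1) hs1 N)"
  define \<phi>2 where "\<phi>2 = snd (wsup (n2, \<mu>2) hs2 N)"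
  have L1: "(N, \<phi>1) \<in> C"
  proof -
    have "wsup (n1, \<mu>1) hs1 N \<in> C"
      using C_sup[OF W1(1)[unfolded Wn1] N1] hsC[OF hs1p] wsup_proj_weighting[OF w1 N1 _ hs1p]
      by (simp add: hs1_def)
    moreover have "wsup (n1, \<mu>1) hs1 N = (N, \<phi>1)" by (simp add: \<phi>1_def wsup_def)
    ultimately show ?thesis by simp
  qed
  have L2: "(N, \<phi>2) \<in> C"
  proof -
    have "wsup (n2, \<mu>2) hs2 N \<in> C"
      using C_sup[OF W2(1)[unfolded Wn2] N1] hsC[OF hs2p] wsup_proj_weighting[OF w2 N1 _ hs2p]
      by (simp add: hs2_def)
    moreover have "wsup (n2, \<mu>2) hs2 N = (N, \<phi>2)" by (simp add: \<phi>2_def wsup_def)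
    ultimately show ?thesis by simp
  qed
  have LC: "(N, \<lambda>f. \<phi>1 f + \<phi>2 f) \<in> C" using C_add[OF L1 L2] .
  define gs where "gs = gs1 @ gs2"
  have gslen: "length gs = N" using W1 W2 Wn1 Wn2 by (simp add: gs_def N_def)
  have gsops: "set gs \<subseteq> ops k" using W1 W2 SS_ops by (auto simp: gs_def)
  have c1: "map (\<lambda>h. comp_op h gs k) hs1 = gs1"
  proof (rule nth_equalityI)
    show "length (map (\<lambda>h. comp_op h gs k) hs1) = length gs1" using W1 Wn1 by (simp add: hs1_def)
    fix i assume "i < length (map (\<lambda>h. comp_op h gs k) hs1)"
    hence i: "i < n1" by (simp add: hs1_def)
    have a: "gs ! i = gs1 ! i" using i W1 Wn1 by (simp add: gs_def nth_append)
    have b: "gs ! i \<in> ops k" using gsops gslen i N_def by auto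
    have c: "comp_op (proj N i) gs k = gs ! i" by (intro comp_proj) (use i gslen N_def b in auto)
    show "map (\<lambda>h. comp_op h gs k) hs1 ! i = gs1 ! i" using i a c by (simp add: hs1_def)
  qed
  have c2: "map (\<lambda>h. comp_op h gs k) hs2 = gs2"
  proof (rule nth_equalityI)
    show "length (map (\<lambda>h. comp_op h gs k) hs2) = length gs2" using W2 Wn2 by (simp add: hs2_def)
    fix i assume "i < length (map (\<lambda>h. comp_op h gs k) hs2)"
    hence i: "i < n2" by (simp add: hs2_def)
    have a: "gs ! (n1 + i) = gs2 ! i" using i W1 Wn1 by (simp add: gs_def nth_append)
    have b: "gs ! (n1 + i) \<in> ops k" using gsops gslen i N_def by auto
    have c: "comp_op (proj N (n1 + i)) gs k = gs ! (n1 + i)" by (intro comp_proj) (use i gslen N_def b in auto)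
    show "map (\<lambda>h. comp_op h gs k) hs2 ! i = gs2 ! i" using i a c by (simp add: hs2_def)
  qed
  have e1: "snd (wsup (N, \<phi>1) gs k) = \<nu>1"
  proof -
    have "wsup (N, \<phi>1) gs k = wsup (wsup (n1, \<mu>1) hs1 N) gs k" by (simp add: \<phi>1_def wsup_def)
    also have "\<dots> = wsup (n1, \<mu>1) gs1 k" using c1 by (simp add: wsup_wsup[OF gslen])
    finally show ?thesis using W1 Wn1 by simp
  qed
  have e2: "snd (wsup (N, \<phi>2) gs k) = \<nu>2"
  proof -
    have "wsup (N, \<phi>2) gs k = wsup (wsup (n2, \<mu>2) hs2 N) gs k" by (simp add: \<phi>2_def wsup_def)
    also have "\<dots> = wsup (n2, \<mu>2) gs2 k" using c2 by (simp add: wsup_wsup[OF gslen])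
    finally show ?thesis using W2 Wn2 by simp
  qed
  have "(\<lambda>f. \<nu>1 f + \<nu>2 f) = snd (wsup (N, \<lambda>f. \<phi>1 f + \<phi>2 f) gs k)"
    using e1 e2 by (auto simp: wsup_add)
  moreover have "set gs \<subseteq> SS" using W1 W2 by (auto simp: gs_def)
  ultimately show ?thesis unfolding LL_def using LC gslen
    by (intro CollectI exI[of _ "(N, \<lambda>f. \<phi>1 f + \<phi>2 f)"] exI[of _ gs]) auto
qed

lemma LL_back: "\<nu> \<in> LL \<Longrightarrow> is_weighting (k, \<nu>) \<Longrightarrow> (k, \<nu>) \<in> C"
proof -
  assume "\<nu> \<in> LL" "is_weighting (k, \<nu>)"
  then obtain W gs where W: "W \<in> C" "set gs \<subseteq> SS" "length gs = fst W" "\<nu> = snd (wsup W gs k)"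
    by (auto simp: LL_def)
  have eq: "wsup W gs k = (k, \<nu>)" using W(4) by (simp add: wsup_def)
  have "wsup W gs k \<in> C"
    using C_sup[OF W(1) k1 W(3)] W(2) \<open>is_weighting (k, \<nu>)\<close> eq by (auto simp: SS_def)
  thus ?thesis using eq by simp
qed


lemma fiber_nonneg:
  assumes w: "is_weighting (n, \<mu>)" and len: "length gs = n" and gl: "set gs \<subseteq> ops l"
    and h: "h \<notin> set gs" and f: "f \<in> ops n" "comp_op f gs l = h"
  shows "\<mu> f \<ge> 0"
proof (rule ccontr)
  assume "\<not> \<mu> f \<ge> 0"
  hence "\<mu> f < 0" by simp
  hence "f \<in> projs n" using weightingD(4)[OF w] f(1) by blast
  then obtain i where i: "i < n" "f = proj n i" unfolding projs_def by blast
  have gi: "gs ! i \<in> set gs" using len i by simp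
  have "gs ! i \<in> ops l" using gl gi by blast
  hence "comp_op (proj n i) gs l = gs ! i" by (intro comp_proj) (simp_all add: i len)
  hence "h = gs ! i" using f(2) i(2) by simp
  thus False using h gi by simp
qed

lemma SS_nonproj_pos:
  assumes h: "h \<in> SS" "h \<notin> projs k"
  shows "\<exists>\<rho>. (k, \<rho>) \<in> C \<and> \<rho> h > 0"
proof -
  have hk: "h \<in> ops k" using h SS_ops by blast
  have "h \<notin> all_projs" using all_projs_ops[OF _ hk] h by blast
  then obtain W where W: "W \<in> C" "h \<in> wsupp W" using h unfolding SS_def wsupp_set_def by blast
  obtain n \<phi> where Wn: "W = (n, \<phi>)" by (cases W)
  have w: "is_weighting (n, \<phi>)" using C_weighting W Wn by blast
  have "h \<notin> projs n"
  proof
    assume "h \<in> projs n"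
    hence "h \<in> ops n" using projs_ops by blast
    hence "n = k" using hk fst_ops by metis
    thus False using h \<open>h \<in> projs n\<close> by simp
  qed
  hence pos: "\<phi> h > 0" using W Wn by (auto simp: wsupp_def)
  hence "h \<in> ops n" using weightingD(2)[OF w, of h] by force
  hence "n = k" using hk fst_ops by metis
  thus ?thesis using W Wn pos by blast
qed

lemma rho_exists_aux:
  "finite A \<Longrightarrow> A \<subseteq> SS - projs k \<Longrightarrow> \<exists>\<rho>. (k, \<rho>) \<in> C \<and> (\<forall>h\<in>A. \<rho> h > 0)"
proof (induction A rule: finite_induct)
  case empty
  thus ?case using C_zero[OF k1] by blast
next
  case (insert x F)
  then obtain \<rho>1 where r1: "(k, \<rho>1) \<in> C" "\<forall>h\<in>F. \<rho>1 h > 0" by blast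
  obtain \<rho>2 where r2: "(k, \<rho>2) \<in> C" "\<rho>2 x > 0" using SS_nonproj_pos insert by blast
  have w1: "is_weighting (k, \<rho>1)" and w2: "is_weighting (k, \<rho>2)" using r1 r2 C_weighting by blast+
  have "(k, \<lambda>f. \<rho>1 f + \<rho>2 f) \<in> C" using C_add r1 r2 by blast
  moreover have "\<forall>h\<in>insert x F. \<rho>1 h + \<rho>2 h > 0"
  proof
    fix h assume hin: "h \<in> insert x F"
    hence np: "h \<notin> projs k" using insert by blast
    have "\<rho>1 h \<ge> 0" "\<rho>2 h \<ge> 0" using weighting_nonneg[OF w1 np] weighting_nonneg[OF w2 np] by auto
    moreover have "\<rho>1 h > 0 \<or> \<rho>2 h > 0" using hin r1 r2 by auto
    ultimately show "\<rho>1 h + \<rho>2 h > 0" by linarith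
  qed
  ultimately show ?case by blast
qed

definition rho :: "'a oper \<Rightarrow> real" where
  "rho = (SOME \<rho>. (k, \<rho>) \<in> C \<and> (\<forall>h\<in>SS - projs k. \<rho> h > 0))"

lemma rho: "(k, rho) \<in> C" "\<And>h. h \<in> SS - projs k \<Longrightarrow> rho h > 0"
proof -
  have "\<exists>\<rho>. (k, \<rho>) \<in> C \<and> (\<forall>h\<in>SS - projs k. \<rho> h > 0)"
    using rho_exists_aux[of "SS - projs k"] finite_SS by blast
  hence "(k, rho) \<in> C \<and> (\<forall>h\<in>SS - projs k. rho h > 0)"
    unfolding rho_def by (rule someI_ex)
  thus "(k, rho) \<in> C" "\<And>h. h \<in> SS - projs k \<Longrightarrow> rho h > 0" by auto
qed

lemma rho_w: "is_weighting (k, rho)" using C_weighting rho(1) by blast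

lemma rho_nonneg: "h \<notin> projs k \<Longrightarrow> rho h \<ge> 0"
  using weighting_nonneg[OF rho_w] by blast

definition tt :: "('a oper \<Rightarrow> real) \<Rightarrow> real" where
  "tt \<nu> = (\<Sum>h\<in>SS - projs k. max 0 (- \<nu> h * (1 / rho h)))"

definition Phi :: "('a oper \<Rightarrow> real) \<Rightarrow> ('a oper \<Rightarrow> real)" where
  "Phi \<nu> = (\<lambda>f. \<nu> f + tt \<nu> * rho f)"

lemma tt_nonneg: "tt \<nu> \<ge> 0"
  unfolding tt_def by (intro sum_nonneg) auto

lemma tt_ge:
  assumes h: "h \<in> SS - projs k"
  shows "\<nu> h + tt \<nu> * rho h \<ge> 0"
proof -
  have fin: "finite (SS - projs k)" using finite_SS by simp
  have "max 0 (- \<nu> h * (1 / rho h)) \<le> tt \<nu>"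
    unfolding tt_def by (rule member_le_sum[OF h _ fin]) auto
  hence "- \<nu> h * (1 / rho h) \<le> tt \<nu>" by linarith
  hence "(- \<nu> h * (1 / rho h)) * rho h \<le> tt \<nu> * rho h"
    using rho(2)[OF h] by (intro mult_right_mono) auto
  moreover have "(- \<nu> h * (1 / rho h)) * rho h = - \<nu> h" using rho(2)[OF h] by simp
  ultimately show ?thesis by linarith
qed

lemma Phi_LL: "\<nu> \<in> LL \<Longrightarrow> Phi \<nu> \<in> LL"
proof -
  assume "\<nu> \<in> LL"
  moreover have "(\<lambda>f. tt \<nu> * rho f) \<in> LL" using LL_scale[OF LL_C[OF rho(1)] tt_nonneg] .
  ultimately have "(\<lambda>f. \<nu> f + tt \<nu> * rho f) \<in> LL" using LL_add by blast
  thus ?thesis by (simp add: Phi_def)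
qed

lemma Phi_weighting:
  assumes nu: "\<nu> \<in> LL"
  shows "is_weighting (k, Phi \<nu>)"
proof (rule is_weightingI)
  show "k \<ge> 1" by (rule k1)
  show "Phi \<nu> f = 0" if "f \<notin> ops k" for f
    using LL_out[OF nu that] weightingD(2)[OF rho_w that] by (simp add: Phi_def)
  show "sum (Phi \<nu>) (ops k) = 0"
    using LL_sum[OF nu] weightingD(3)[OF rho_w]
    by (simp add: Phi_def sum.distrib sum_distrib_left[symmetric])
  show "0 \<le> Phi \<nu> f" if f: "f \<in> ops k" "f \<notin> projs k" for f
  proof (cases "f \<in> SS")
    case True thus ?thesis using tt_ge[of f \<nu>] f by (simp add: Phi_def)
  next
    case False
    have "\<nu> f \<ge> 0" using LL_neg[OF nu False] .
    moreover have "tt \<nu> * rho f \<ge> 0" using tt_nonneg rho_nonneg[OF f(2)] by simp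
    ultimately show ?thesis by (simp add: Phi_def)
  qed
qed

lemma Phi_C: "\<nu> \<in> LL \<Longrightarrow> (k, Phi \<nu>) \<in> C"
  using LL_back Phi_LL Phi_weighting by blast

lemma Phi_cont: "continuous_on UNIV Phi"
  unfolding Phi_def tt_def
  by (intro continuous_on_coordinatewise_then_product continuous_intros continuous_on_product_coordinates)

lemma Phi_id:
  assumes w: "is_weighting (k, \<omega>)"
  shows "Phi \<omega> = \<omega>"
proof -
  have "max 0 (- \<omega> h * (1 / rho h)) = 0" if h: "h \<in> SS - projs k" for h
  proof -
    have "\<omega> h \<ge> 0" using weighting_nonneg[OF w] h by blast
    moreover have "rho h > 0" using rho(2)[OF h] .
    ultimately have "- \<omega> h * (1 / rho h) \<le> 0" by (simp add: divide_nonneg_pos)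
    thus ?thesis by simp
  qed
  hence "tt \<omega> = 0" unfolding tt_def by simp
  thus ?thesis by (simp add: Phi_def)
qed

lemma closure_LL_C:
  assumes w: "is_weighting (k, \<omega>)" and cl: "\<omega> \<in> closure LL"
  shows "(k, \<omega>) \<in> C"
proof -
  have "Phi ` closure LL \<subseteq> {\<omega>. (k, \<omega>) \<in> C}"
  proof (rule image_closure_subset)
    show "continuous_on (closure LL) Phi" using Phi_cont continuous_on_subset by blast
    show "closed {\<omega>. (k, \<omega>) \<in> C}" by (rule C_closed)
    show "Phi ` LL \<subseteq> {\<omega>. (k, \<omega>) \<in> C}" using Phi_C by blast
  qed
  hence "Phi \<omega> \<in> {\<omega>. (k, \<omega>) \<in> C}" using cl by blast
  thus ?thesis using Phi_id[OF w] by simp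
qed

lemma CC:
  assumes M: "(n, \<phi>) \<in> C" and f: "f \<in> wsupp (n, \<phi>)" and gs: "set gs \<subseteq> SS" and len: "length gs = n"
  shows "comp_op f gs k \<in> SS"
proof -
  have w: "is_weighting (n, \<phi>)" using C_weighting M by blast
  have fn: "f \<in> ops n" using wsupp_ops[OF w] f by blast
  have gsk: "set gs \<subseteq> ops k" using gs SS_ops by blast
  show ?thesis
  proof (cases "f \<in> projs n")
    case True
    then obtain i where i: "i < n" "f = proj n i" unfolding projs_def by blast
    have gi: "gs ! i \<in> set gs" using len i by simp
    have "gs ! i \<in> ops k" using gsk gi by blast
    hence "comp_op (proj n i) gs k = gs ! i" by (intro comp_proj) (simp_all add: i len)
    thus ?thesis using gi gs i by auto
  next
    case False
    hence pos: "\<phi> f > 0" using f by (auto simp: wsupp_def)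
    define h where "h = comp_op f gs k"
    have hk: "h \<in> ops k" unfolding h_def by (rule comp_op_ops)
    show ?thesis
    proof (cases "h \<in> set gs \<or> h \<in> projs k")
      case True thus ?thesis using gs projs_SS h_def by blast
    next
      case False
      hence hg: "h \<notin> set gs" and hp: "h \<notin> projs k" by auto
      define \<nu> where "\<nu> = snd (wsup (n, \<phi>) gs k)"
      have nuL: "\<nu> \<in> LL" unfolding LL_def \<nu>_def using M gs len
        by (intro CollectI exI[of _ "(n, \<phi>)"] exI[of _ gs]) auto
      have "\<phi> f \<le> (\<Sum>f'\<in>{f' \<in> ops n. comp_op f' gs k = h}. \<phi> f')"
      proof (rule member_le_sum)
        show "f \<in> {f' \<in> ops n. comp_op f' gs k = h}" using fn h_def by simp
        show "finite {f' \<in> ops n. comp_op f' gs k = h}" by (rule finite_subset[OF _ finite_ops[of n]]) auto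
        fix x assume "x \<in> {f' \<in> ops n. comp_op f' gs k = h} - {f}"
        thus "0 \<le> \<phi> x" using fiber_nonneg[OF w len gsk hg] by blast
      qed
      hence "\<nu> h \<ge> \<phi> f" by (simp add: \<nu>_def wsup_def)
      moreover have "tt \<nu> * rho h \<ge> 0" using tt_nonneg rho_nonneg[OF hp] by simp
      ultimately have "Phi \<nu> h > 0" using pos by (simp add: Phi_def)
      hence "h \<in> wsupp (k, Phi \<nu>)" by (simp add: wsupp_def)
      hence "h \<in> wsupp_set C" using Phi_C[OF nuL] unfolding wsupp_set_def by blast
      thus ?thesis using hk h_def SS_def by blast
    qed
  qed
qed


definition ts :: "'a list list" where
  "ts = (SOME ts. distinct ts \<and> set ts = {xs. length xs = k})"

lemma ts: "set ts = {xs. length xs = k}" "distinct ts"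
proof -
  have "finite {xs::'a list. length xs = k}"
    using finite_lists_length_eq[of "UNIV::'a set" k] by simp
  hence "\<exists>ts. distinct ts \<and> set ts = {xs::'a list. length xs = k}"
    using finite_distinct_list by blast
  hence "distinct ts \<and> set ts = {xs. length xs = k}" unfolding ts_def by (rule someI_ex)
  thus "set ts = {xs. length xs = k}" "distinct ts" by auto
qed

definition mm :: nat where "mm = length ts"

lemma mm1: "mm \<ge> 1"
proof -
  have "replicate k undefined \<in> set ts" using ts by simp
  hence "ts \<noteq> []" by auto
  thus ?thesis by (simp add: mm_def Suc_le_eq)
qed

definition tup :: "'a oper \<Rightarrow> 'a list" where "tup f = map (snd f) ts"

lemma tup_len: "length (tup f) = mm" by (simp add: tup_def mm_def)

lemma tup_inj: "f \<in> ops k \<Longrightarrow> g \<in> ops k \<Longrightarrow> tup f = tup g \<Longrightarrow> f = g"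
proof (rule ops_eqI)
  fix xs :: "'a list" assume "tup f = tup g" "length xs = k"
  hence "xs \<in> set ts" using ts by simp
  thus "snd f xs = snd g xs" using \<open>tup f = tup g\<close> unfolding tup_def by (simp add: map_eq_conv)
qed

lemma inj_tup: "inj_on tup SS"
  using tup_inj SS_ops by (meson inj_onI subsetD)

lemma app_tup: "app_op f mm (map tup gs) = tup (comp_op f gs k)"
proof (rule nth_equalityI)
  show "length (app_op f mm (map tup gs)) = length (tup (comp_op f gs k))"
    by (simp add: app_op_def tup_len)
  fix j assume "j < length (app_op f mm (map tup gs))"
  hence j: "j < mm" by (simp add: app_op_def)
  hence tj: "ts ! j \<in> set ts" by (simp add: mm_def)
  hence lj: "length (ts ! j) = k" using ts by simp
  have "app_op f mm (map tup gs) ! j = snd f (map (\<lambda>g. snd g (ts ! j)) gs)"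
    using j by (simp add: app_op_def tup_def mm_def o_def)
  also have "\<dots> = tup (comp_op f gs k) ! j"
    using j lj by (simp add: tup_def comp_op_def mm_def)
  finally show "app_op f mm (map tup gs) ! j = tup (comp_op f gs k) ! j" .
qed

definition Rg :: "('a oper \<Rightarrow> real) \<Rightarrow> 'a wrel" where
  "Rg \<gamma> = (mm, \<lambda>y. if y \<in> tup ` SS then ereal (\<gamma> (the_inv_into SS tup y)) else \<infinity>)"

lemma Rg_fst: "fst (Rg \<gamma>) = mm" by (simp add: Rg_def)

lemma Rg_wrels: "Rg \<gamma> \<in> wrels"
  unfolding Rg_def wrels_def using mm1 tup_len by auto

lemma feas_Rg: "feas (Rg \<gamma>) = tup ` SS"
  unfolding feas_def Rg_def using tup_len by auto

lemma Rg_val: "h \<in> SS \<Longrightarrow> snd (Rg \<gamma>) (tup h) = ereal (\<gamma> h)"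
  unfolding Rg_def using the_inv_into_f_f[OF inj_tup] by auto

lemma feas_lists:
  assumes "set xs \<subseteq> tup ` SS"
  shows "\<exists>gs. set gs \<subseteq> SS \<and> xs = map tup gs"
proof (intro exI conjI)
  show "set (map (the_inv_into SS tup) xs) \<subseteq> SS"
    using assms the_inv_into_into[OF inj_tup] by auto
  have "map tup (map (the_inv_into SS tup) xs) = map id xs"
    unfolding map_map by (rule map_cong[OF refl]) (use assms f_the_inv_into_f[OF inj_tup] in auto)
  thus "xs = map tup (map (the_inv_into SS tup) xs)" by simp
qed

lemma Rg_Imp:
  assumes OC: "\<Omega> \<subseteq> C" and sep: "\<forall>\<nu>\<in>LL. (\<Sum>x\<in>ops k. \<nu> x * \<gamma> x) \<le> 0"
  shows "Rg \<gamma> \<in> Imp \<Omega>"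
  unfolding Imp_def
proof (intro CollectI conjI ballI Rg_wrels)
  fix M assume MO: "M \<in> \<Omega>"
  obtain n \<phi> where Mn: "M = (n, \<phi>)" by (cases M)
  have MC: "(n, \<phi>) \<in> C" using MO OC Mn by blast
  have w: "is_weighting (n, \<phi>)" using C_weighting MC by blast
  have polf: "f \<in> Pol (Rg \<gamma>)" if fs: "f \<in> wsupp (n, \<phi>)" for f
  proof -
    have fn: "f \<in> ops n" using wsupp_ops[OF w] fs by blast
    show ?thesis unfolding Pol_iff[OF fn]
    proof (intro allI impI)
      fix xs :: "'a list list" assume xs: "length xs = n" "set xs \<subseteq> feas (Rg \<gamma>)"
      have "set xs \<subseteq> tup ` SS" using xs(2) feas_Rg by simp
      then obtain gs where gs: "set gs \<subseteq> SS" "xs = map tup gs" using feas_lists by blast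
      have "app_op f (fst (Rg \<gamma>)) xs = tup (comp_op f gs k)" using gs app_tup Rg_fst by simp
      moreover have "comp_op f gs k \<in> SS" using CC[OF MC fs gs(1)] xs gs by simp
      ultimately show "app_op f (fst (Rg \<gamma>)) xs \<in> feas (Rg \<gamma>)" using feas_Rg by simp
    qed
  qed
  show "improves M (Rg \<gamma>)"
    unfolding Mn improves_iff[OF w Rg_wrels]
  proof (intro conjI ballI allI impI)
    fix f :: "'a oper" assume "f \<in> ops n" "f \<notin> Pol (Rg \<gamma>)"
    hence "f \<notin> wsupp (n, \<phi>)" using polf by blast
    thus "\<phi> f \<le> 0" by (auto simp: wsupp_def)
  next
    fix xs :: "'a list list" assume xs: "length xs = n" "set xs \<subseteq> feas (Rg \<gamma>)"
    have "set xs \<subseteq> tup ` SS" using xs(2) feas_Rg by simp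
    then obtain gs where gs: "set gs \<subseteq> SS" "xs = map tup gs" using feas_lists by blast
    have len: "length gs = n" using xs gs by simp
    have "(\<Sum>f\<in>ops n. \<phi> f * real_of_ereal (snd (Rg \<gamma>) (app_op f (fst (Rg \<gamma>)) xs)))
        = (\<Sum>f\<in>ops n. \<phi> f * \<gamma> (comp_op f gs k))"
    proof (rule sum.cong[OF refl])
      fix f :: "'a oper" assume fn: "f \<in> ops n"
      show "\<phi> f * real_of_ereal (snd (Rg \<gamma>) (app_op f (fst (Rg \<gamma>)) xs)) = \<phi> f * \<gamma> (comp_op f gs k)"
      proof (cases "\<phi> f = 0")
        case True thus ?thesis by simp
      next
        case False
        hence "f \<in> wsupp (n, \<phi>)"
          using weightingD(4)[OF w fn] by (auto simp: wsupp_def not_less_iff_gr_or_eq)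
        hence "comp_op f gs k \<in> SS" using CC[OF MC _ gs(1) len] by blast
        thus ?thesis using gs app_tup Rg_fst Rg_val by simp
      qed
    qed
    also have "\<dots> = (\<Sum>h\<in>ops k. snd (wsup (n, \<phi>) gs k) h * \<gamma> h)"
      by (rule wsup_inner[symmetric])
    also have "\<dots> \<le> 0"
    proof -
      have "snd (wsup (n, \<phi>) gs k) \<in> LL" unfolding LL_def using MC gs len
        by (intro CollectI exI[of _ "(n, \<phi>)"] exI[of _ gs]) auto
      thus ?thesis using sep by blast
    qed
    finally show "(\<Sum>f\<in>ops n. \<phi> f * real_of_ereal (snd (Rg \<gamma>) (app_op f (fst (Rg \<gamma>)) xs))) \<le> 0" .
  qed
qed

lemma W_not_improves:
  assumes w: "is_weighting (k, \<omega>)" and pos: "(\<Sum>x\<in>ops k. \<omega> x * \<gamma> x) > 0"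
  shows "\<not> improves (k, \<omega>) (Rg \<gamma>)"
proof
  assume imp: "improves (k, \<omega>) (Rg \<gamma>)"
  hence A: "\<forall>f\<in>ops k. f \<notin> Pol (Rg \<gamma>) \<longrightarrow> \<omega> f \<le> 0"
    and B: "\<forall>xs. length xs = k \<longrightarrow> set xs \<subseteq> feas (Rg \<gamma>) \<longrightarrow>
        (\<Sum>f\<in>ops k. \<omega> f * real_of_ereal (snd (Rg \<gamma>) (app_op f (fst (Rg \<gamma>)) xs))) \<le> 0"
    using improves_iff[OF w Rg_wrels] by blast+
  define es :: "'a oper list" where "es = map (proj k) [0..<k]"
  have esS: "set es \<subseteq> SS" using proj_SS by (auto simp: es_def)
  define xs0 where "xs0 = map tup es"
  have xs0f: "set xs0 \<subseteq> feas (Rg \<gamma>)" using esS feas_Rg by (auto simp: xs0_def)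
  have xs0l: "length xs0 = k" by (simp add: xs0_def es_def)
  have app0: "app_op f (fst (Rg \<gamma>)) xs0 = tup f" if "f \<in> ops k" for f
    using app_tup[of f es] comp_id[OF that] Rg_fst by (simp add: xs0_def es_def)
  have "(\<Sum>f\<in>ops k. \<omega> f * real_of_ereal (snd (Rg \<gamma>) (app_op f (fst (Rg \<gamma>)) xs0)))
      = (\<Sum>f\<in>ops k. \<omega> f * \<gamma> f)"
  proof (rule sum.cong[OF refl])
    fix f :: "'a oper" assume fk: "f \<in> ops k"
    show "\<omega> f * real_of_ereal (snd (Rg \<gamma>) (app_op f (fst (Rg \<gamma>)) xs0)) = \<omega> f * \<gamma> f"
    proof (cases "\<omega> f = 0")
      case True thus ?thesis by simp
    next
      case False
      have "f \<in> SS"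
      proof (cases "\<omega> f < 0")
        case True thus ?thesis using weightingD(4)[OF w fk] projs_SS by blast
      next
        case False
        hence "\<omega> f > 0" using \<open>\<omega> f \<noteq> 0\<close> by simp
        have "f \<in> Pol (Rg \<gamma>)"
        proof (rule ccontr)
          assume "f \<notin> Pol (Rg \<gamma>)"
          hence "\<omega> f \<le> 0" using A fk by blast
          thus False using \<open>\<omega> f > 0\<close> by simp
        qed
        hence "app_op f (fst (Rg \<gamma>)) xs0 \<in> feas (Rg \<gamma>)" using Pol_iff[OF fk] xs0f xs0l by blast
        hence "tup f \<in> tup ` SS" using app0[OF fk] feas_Rg by simp
        then obtain h where "h \<in> SS" "tup f = tup h" by auto
        thus ?thesis using tup_inj[OF fk] SS_ops by blast
      qed
      thus ?thesis using app0[OF fk] Rg_val by simp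
    qed
  qed
  moreover have "(\<Sum>f\<in>ops k. \<omega> f * real_of_ereal (snd (Rg \<gamma>) (app_op f (fst (Rg \<gamma>)) xs0))) \<le> 0"
    using B xs0f xs0l by blast
  ultimately have "(\<Sum>f\<in>ops k. \<omega> f * \<gamma> f) \<le> 0" by simp
  thus False using pos by simp
qed

lemma hard_main:
  assumes OC: "\<Omega> \<subseteq> C" and W: "(k, \<omega>) \<in> wPol (Imp \<Omega>)"
  shows "(k, \<omega>) \<in> C"
proof -
  have w: "is_weighting (k, \<omega>)" using W by (simp add: wPol_def weightings_def)
  show ?thesis
  proof (cases "\<omega> \<in> closure LL")
    case True thus ?thesis using closure_LL_C[OF w] by blast
  next
    case False
    have "\<exists>\<gamma>. (\<forall>\<nu>\<in>LL. (\<Sum>x\<in>ops k. \<nu> x * \<gamma> x) \<le> 0) \<and> (\<Sum>x\<in>ops k. \<omega> x * \<gamma> x) > 0"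
    proof (rule cone_sep[of "ops k :: 'a oper set" LL \<omega>])
      show "finite (ops k :: 'a oper set)" by (rule finite_ops)
      show "v x = 0" if "v \<in> LL" "x \<notin> ops k" for v x using LL_out that by blast
      show "(\<lambda>_. 0) \<in> LL" by (rule LL_zero)
      show "(\<lambda>x. u x + v x) \<in> LL" if "u \<in> LL" "v \<in> LL" for u v using LL_add that by blast
      show "(\<lambda>x. c * v x) \<in> LL" if "v \<in> LL" "c \<ge> 0" for v c using LL_scale that by blast
      show "\<omega> x = 0" if "x \<notin> ops k" for x using weightingD(2)[OF w that] .
      show "\<omega> \<notin> closure LL" by (rule False)
    qed
    then obtain \<gamma> where g: "\<forall>\<nu>\<in>LL. (\<Sum>x\<in>ops k. \<nu> x * \<gamma> x) \<le> 0" "(\<Sum>x\<in>ops k. \<omega> x * \<gamma> x) > 0"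
      by blast
    have "Rg \<gamma> \<in> Imp \<Omega>" using Rg_Imp[OF OC g(1)] .
    hence "improves (k, \<omega>) (Rg \<gamma>)" using W by (simp add: wPol_def)
    thus ?thesis using W_not_improves[OF w g(2)] by blast
  qed
qed

end

lemma hard_dir:
  fixes \<Omega> :: "('a::finite) weighting set"
  assumes wc: "wclone C" and OC: "\<Omega> \<subseteq> C"
  shows "wPol (Imp \<Omega>) \<subseteq> C"
proof
  fix W assume W: "W \<in> wPol (Imp \<Omega>)"
  obtain k \<omega> where Wk: "W = (k, \<omega>)" by (cases W)
  have "k \<ge> 1" using W Wk weightingD(1) by (auto simp: wPol_def weightings_def)
  thus "W \<in> C" using hard_main[OF wc _ OC] W Wk by blast
qed

theorem theorem7:
  fixes \<Omega> :: "('a::finite) weighting set"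
  assumes "CARD('a) \<ge> 2"
    and "\<Omega> \<subseteq> weightings"
  shows "wPol (Imp \<Omega>) = wClone \<Omega>"
proof
  show "wClone \<Omega> \<subseteq> wPol (Imp \<Omega>)" using easy_dir[OF assms(2)] .
  show "wPol (Imp \<Omega>) \<subseteq> wClone \<Omega>"
    unfolding wClone_def using hard_dir by blast
qed


end
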